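(* Let $C\subseteq\mathbb{R}^n$ be non-empty and compact and set $K:=C\times[0,\infty)\subseteq\mathbb{R}^{n+1}$, so that $K^\sharp=\{0\}\times[0,\infty)$. Let $s=(s_\alpha)_{\alpha\in\mathbb{N}_0^{n+1}}$ be a real sequence. Then the following are equivalent: (i) $D(s)$ is a $K$-positivity preserver; (ii) $s$ is a $K^\sharp$-moment sequence.
   Context: $D(s):=\sum_{\alpha}\frac{s_\alpha}{\alpha!}\partial^\alpha$ acting on the polynomial ring in the $n+1$ variables. A linear map $T$ is a $K$-positivity preserver if $T\,\mathrm{Pos}(K)\subseteq\mathrm{Pos}(K)$, with $\mathrm{Pos}(K)$ the polynomials non-negative on $K$. $K^\sharp:=\{x : x+K\subseteq K\}$. For closed $L$, $s$ is an $L$-moment sequence if there is a measure $\mu$ with $\mathrm{supp}\,\mu\subseteq L$ and $s_\alpha=\int x^\alpha\,\mathrm{d}\mu$ for all $\alpha$. *)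

theory Defs
  imports "HOL-Analysis.Analysis"
begin

text \<open>Polynomials in the finitely many variables indexed by a finite type 'v
  (for the theorem, 'v = 'n option, i.e. n+1 variables, None being the last one),
  represented by their coefficient functions on multi-indices 'v \<Rightarrow> nat.\<close>

definition mpoly :: "(('v::finite \<Rightarrow> nat) \<Rightarrow> real) \<Rightarrow> bool" where
  "mpoly c \<longleftrightarrow> finite {\<alpha>. c \<alpha> \<noteq> 0}"

definition monom_eval :: "('v::finite \<Rightarrow> nat) \<Rightarrow> real^'v \<Rightarrow> real" where
  "monom_eval \<alpha> x = (\<Prod>i\<in>UNIV. (x $ i) ^ \<alpha> i)"

definition meval :: "(('v::finite \<Rightarrow> nat) \<Rightarrow> real) \<Rightarrow> real^'v \<Rightarrow> real" where
  "meval c x = (\<Sum>\<alpha>\<in>{\<alpha>. c \<alpha> \<noteq> 0}. c \<alpha> * monom_eval \<alpha> x)"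

definition mfact :: "('v::finite \<Rightarrow> nat) \<Rightarrow> real" where
  "mfact \<alpha> = (\<Prod>i\<in>UNIV. fact (\<alpha> i))"

text \<open>The partial derivative operator applied to a polynomial (coefficientwise):
  the coefficient of x^beta in the alpha-th derivative of sum_gamma c_gamma x^gamma.\<close>
definition mpartial :: "('v::finite \<Rightarrow> nat) \<Rightarrow> (('v \<Rightarrow> nat) \<Rightarrow> real) \<Rightarrow> ('v \<Rightarrow> nat) \<Rightarrow> real" where
  "mpartial \<alpha> c \<beta> = c (\<lambda>i. \<alpha> i + \<beta> i) * (\<Prod>i\<in>UNIV. fact (\<alpha> i + \<beta> i) / fact (\<beta> i))"

text \<open>D(s) = sum_alpha s_alpha / alpha! partial^alpha; only the finitely many alpha
  below some exponent of the polynomial contribute.\<close>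
definition Dop :: "(('v::finite \<Rightarrow> nat) \<Rightarrow> real) \<Rightarrow> (('v \<Rightarrow> nat) \<Rightarrow> real) \<Rightarrow> ('v \<Rightarrow> nat) \<Rightarrow> real" where
  "Dop s c = (\<lambda>\<beta>. \<Sum>\<alpha>\<in>{\<alpha>. \<exists>\<gamma>. c \<gamma> \<noteq> 0 \<and> (\<forall>i. \<alpha> i \<le> \<gamma> i)}.
      s \<alpha> / mfact \<alpha> * mpartial \<alpha> c \<beta>)"

definition pos_preserver ::
  "(real^'v::finite) set \<Rightarrow> ((('v \<Rightarrow> nat) \<Rightarrow> real) \<Rightarrow> (('v \<Rightarrow> nat) \<Rightarrow> real)) \<Rightarrow> bool" where
  "pos_preserver K T \<longleftrightarrow>
     (\<forall>c. mpoly c \<and> (\<forall>x\<in>K. meval c x \<ge> 0) \<longrightarrow> (\<forall>x\<in>K. meval (T c) x \<ge> 0))"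

definition Ksharp :: "(real^'v::finite) set \<Rightarrow> (real^'v) set" where
  "Ksharp K = {x. (\<lambda>y. x + y) ` K \<subseteq> K}"

definition moment_seq :: "(real^'v::finite) set \<Rightarrow> (('v \<Rightarrow> nat) \<Rightarrow> real) \<Rightarrow> bool" where
  "moment_seq L s \<longleftrightarrow> (\<exists>\<mu> :: (real^'v) measure.
     sets \<mu> = sets borel \<and> emeasure \<mu> (UNIV - L) = 0 \<and>
     (\<forall>\<alpha>. integrable \<mu> (monom_eval \<alpha>) \<and> s \<alpha> = (\<integral>x. monom_eval \<alpha> x \<partial>\<mu>)))"

end

theory Submission
  imports Defs "HOL-Probability.Probability"
begin

lemma sum_le_2d:
  fixes t :: real assumes "0 \<le> t"
  shows "1 + (\<Sum>k\<le>d. (t^k)^2) \<le> 2 * (\<Sum>k\<le>2*d. t^k)"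
proof -
  have "(\<Sum>k\<le>d. (t^k)^2) = (\<Sum>k\<in>(\<lambda>k. 2*k) ` {..d}. t^k)"
    by (subst sum.reindex) (auto simp: inj_on_def power_mult[symmetric] mult.commute)
  also have "\<dots> \<le> (\<Sum>k\<le>2*d. t^k)"
    by (rule sum_mono2) (use assms in auto)
  finally have 1: "(\<Sum>k\<le>d. (t^k)^2) \<le> (\<Sum>k\<le>2*d. t^k)" .
  have "1 = t^0" by simp
  also have "\<dots> \<le> (\<Sum>k\<le>2*d. t^k)"
    by (rule member_le_sum) (use assms in auto)
  finally show ?thesis using 1 by simp
qed

lemma atomic_approx:
  fixes m :: "nat \<Rightarrow> real"
  assumes pos: "\<And>a D. (\<And>t. 0 \<le> t \<Longrightarrow> 0 \<le> (\<Sum>k\<le>D. a k * t^k)) \<Longrightarrow> 0 \<le> (\<Sum>k\<le>D. a k * m k)"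
    and eps: "\<epsilon> > 0"
  shows "\<exists>P w. finite P \<and> (\<forall>t\<in>P. 0 \<le> t \<and> 0 \<le> w t) \<and> (\<forall>k\<le>d. \<bar>(\<Sum>t\<in>P. w t * t^k) - m k\<bar> \<le> \<epsilon>)"
proof -
  define v where "v P w k = (\<Sum>t\<in>P. w t * t^k)" for P and w :: "real \<Rightarrow> real" and k :: nat
  define \<Phi> where "\<Phi> P w = (\<Sum>k\<le>d. (v P w k - m k)^2)" for P w
  define adm where "adm P w \<longleftrightarrow> finite P \<and> (\<forall>t\<in>P. 0 \<le> t \<and> 0 \<le> w t)" for P and w :: "real \<Rightarrow> real"
  define S where "S = {\<Phi> P w | P w. adm P w}"
  define I where "I = Inf S"
  have Sne: "S \<noteq> {}" unfolding S_def adm_def by auto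
  have Sbdd: "bdd_below S" unfolding S_def \<Phi>_def by (auto intro!: bdd_belowI[of _ 0] sum_nonneg)
  have low: "I \<le> \<Phi> P w" if "adm P w" for P w
    unfolding I_def by (rule cInf_lower) (use that Sbdd in \<open>auto simp: S_def\<close>)
  define S2 where "S2 = (\<Sum>k\<le>2*d. m k)"
  define A where "A = 1/2 + (\<Sum>k\<le>d. (m k)^2) + \<bar>S2\<bar>"
  have A: "A > 0" unfolding A_def by (auto intro!: add_pos_nonneg sum_nonneg)
  define \<eta> where "\<eta> = min (1/2) (\<epsilon>^2 / (2*A))"
  have eta12: "\<eta> > 0" "\<eta> \<le> 1/2"
    using A eps by (auto simp: \<eta>_def field_simps)
  have "\<eta> \<le> \<epsilon>^2 / (2*A)" unfolding \<eta>_def by simp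
  then have "\<eta> * (2*A) \<le> \<epsilon>^2" using A by (simp add: pos_le_divide_eq)
  then have eta: "\<eta> > 0" "\<eta> \<le> 1/2" "2 * \<eta> * A \<le> \<epsilon>^2"
    using eta12 by (auto simp: algebra_simps)
  have "I < I + \<eta>^2" using eta by simp
  then obtain z where "z \<in> S" "z < I + \<eta>^2" using cInf_lessD[OF Sne] unfolding I_def by blast
  then obtain P w where Pw: "adm P w" "\<Phi> P w < I + \<eta>^2" unfolding S_def by auto
  define r where "r k = v P w k - m k" for k
  define vv where "vv k = v P w k" for k
  have Phi: "\<Phi> P w = (\<Sum>k\<le>d. (r k)^2)" unfolding \<Phi>_def r_def by simp
  have F2: "(\<Sum>k\<le>d. r k * t^k) + \<eta> * (\<Sum>k\<le>2*d. t^k) \<ge> 0" if t: "0 \<le> t" for t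
  proof -
    define P' where "P' = insert t P"
    define w' where "w' u = (if u = t then \<eta> else 0) + (if u \<in> P then w u else 0)" for u
    have adm': "adm P' w'" using Pw(1) t eta unfolding adm_def P'_def w'_def by auto
    have fin: "finite P" using Pw(1) adm_def by auto
    have v': "v P' w' k = v P w k + \<eta> * t^k" for k
    proof -
      have "v P' w' k = (\<Sum>u\<in>P'. (if u = t then \<eta> * t^k else 0)) + (\<Sum>u\<in>P'. (if u \<in> P then w u * u^k else 0))"
        unfolding v_def w'_def sum.distrib[symmetric] by (rule sum.cong) (auto simp: distrib_right)
      also have "(\<Sum>u\<in>P'. (if u = t then \<eta> * t^k else 0)) = \<eta> * t^k"
        using fin by (simp add: P'_def sum.delta')
      also have "(\<Sum>u\<in>P'. (if u \<in> P then w u * u^k else 0)) = (\<Sum>u\<in>P. w u * u^k)"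
        using fin by (simp add: P'_def sum.If_cases Int_absorb1 subset_insertI)
      finally show ?thesis unfolding v_def by simp
    qed
    have "\<Phi> P' w' = (\<Sum>k\<le>d. (r k + \<eta> * t^k)^2)" unfolding \<Phi>_def v' r_def by (simp add: algebra_simps)
    also have "\<dots> = \<Phi> P w + 2 * \<eta> * (\<Sum>k\<le>d. r k * t^k) + \<eta>^2 * (\<Sum>k\<le>d. (t^k)^2)"
      unfolding Phi by (simp add: power2_sum sum.distrib sum_distrib_left algebra_simps power_mult_distrib)
    finally have "\<Phi> P w + 2 * \<eta> * (\<Sum>k\<le>d. r k * t^k) + \<eta>^2 * (\<Sum>k\<le>d. (t^k)^2) \<ge> I"
      using low[OF adm'] by simp
    with Pw(2) have "2 * \<eta> * (\<Sum>k\<le>d. r k * t^k) + \<eta>^2 * (1 + (\<Sum>k\<le>d. (t^k)^2)) > 0"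
      by (simp add: algebra_simps)
    moreover have "\<eta>^2 * (1 + (\<Sum>k\<le>d. (t^k)^2)) \<le> \<eta>^2 * (2 * (\<Sum>k\<le>2*d. t^k))"
      by (rule mult_left_mono[OF sum_le_2d[OF t]]) simp
    ultimately have "2 * \<eta> * ((\<Sum>k\<le>d. r k * t^k) + \<eta> * (\<Sum>k\<le>2*d. t^k)) > 0"
      by (simp add: algebra_simps power2_eq_square)
    then show ?thesis using eta by (simp add: zero_less_mult_iff)
  qed
  have rm: "(\<Sum>k\<le>d. r k * m k) + \<eta> * S2 \<ge> 0"
  proof -
    define a where "a k = (if k \<le> d then r k else 0) + \<eta>" for k
    have ex: "(\<Sum>k\<le>2*d. (if k \<le> d then r k else 0) * f k) = (\<Sum>k\<le>d. r k * f k)" for f :: "nat \<Rightarrow> real"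
    proof -
      have "(\<Sum>k\<le>2*d. (if k \<le> d then r k else 0) * f k) = (\<Sum>k\<in>{..2*d} \<inter> {k. k \<le> d}. r k * f k)"
        by (subst sum.inter_restrict) (auto intro!: sum.cong)
      also have "{..2*d} \<inter> {k. k \<le> d} = {..d}" by auto
      finally show ?thesis .
    qed
    have "0 \<le> (\<Sum>k\<le>2*d. a k * m k)"
    proof (rule pos)
      fix t :: real assume "0 \<le> t"
      have "(\<Sum>k\<le>2*d. a k * t^k) = (\<Sum>k\<le>d. r k * t^k) + \<eta> * (\<Sum>k\<le>2*d. t^k)"
        unfolding a_def by (simp add: distrib_right sum.distrib ex sum_distrib_left)
      then show "0 \<le> (\<Sum>k\<le>2*d. a k * t^k)" using F2[OF \<open>0 \<le> t\<close>] by simp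
    qed
    also have "(\<Sum>k\<le>2*d. a k * m k) = (\<Sum>k\<le>d. r k * m k) + \<eta> * S2"
      unfolding a_def S2_def by (simp add: distrib_right sum.distrib ex sum_distrib_left)
    finally show ?thesis .
  qed
  have F3: "\<bar>(\<Sum>k\<le>d. r k * vv k)\<bar> \<le> \<eta> * (1 + (\<Sum>k\<le>d. (vv k)^2)) / 2"
  proof -
    have sc: "2 * tt * (\<Sum>k\<le>d. r k * vv k) + tt^2 * (\<Sum>k\<le>d. (vv k)^2) > -(\<eta>^2)"
      if "\<bar>tt\<bar> \<le> 1/2" for tt
    proof -
      define w' where "w' u = (1 + tt) * w u" for u
      have adm': "adm P w'" using Pw(1) that unfolding adm_def w'_def by auto
      have v': "v P w' k = vv k + tt * vv k" for k
        unfolding v_def w'_def vv_def by (simp add: sum_distrib_left algebra_simps sum.distrib)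
      have "\<Phi> P w' = (\<Sum>k\<le>d. (r k + tt * vv k)^2)" unfolding \<Phi>_def v' r_def vv_def by (simp add: algebra_simps)
      also have "\<dots> = \<Phi> P w + 2 * tt * (\<Sum>k\<le>d. r k * vv k) + tt^2 * (\<Sum>k\<le>d. (vv k)^2)"
        unfolding Phi by (simp add: power2_sum sum.distrib sum_distrib_left algebra_simps power_mult_distrib)
      finally show ?thesis using low[OF adm'] Pw(2) by simp
    qed
    have a: "2 * \<eta> * (\<Sum>k\<le>d. r k * vv k) + \<eta>^2 * (\<Sum>k\<le>d. (vv k)^2) > -(\<eta>^2)"
      using sc[of \<eta>] eta by simp
    have b: "2 * (-\<eta>) * (\<Sum>k\<le>d. r k * vv k) + (-\<eta>)^2 * (\<Sum>k\<le>d. (vv k)^2) > -(\<eta>^2)"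
      using sc[of "-\<eta>"] eta by simp
    have a': "\<eta> * (2 * (\<Sum>k\<le>d. r k * vv k) + \<eta> * (1 + (\<Sum>k\<le>d. (vv k)^2))) > 0"
      using a by (simp add: algebra_simps power2_eq_square)
    have b': "\<eta> * (- 2 * (\<Sum>k\<le>d. r k * vv k) + \<eta> * (1 + (\<Sum>k\<le>d. (vv k)^2))) > 0"
      using b by (simp add: algebra_simps power2_eq_square)
    from a' b' eta show ?thesis by (simp add: zero_less_mult_iff abs_le_iff)
  qed
  have vv: "vv k = r k + m k" for k unfolding r_def vv_def by simp
  have vv2: "(\<Sum>k\<le>d. (vv k)^2) \<le> 2 * \<Phi> P w + 2 * (\<Sum>k\<le>d. (m k)^2)"
  proof -
    have "(\<Sum>k\<le>d. (vv k)^2) \<le> (\<Sum>k\<le>d. 2 * (r k)^2 + 2 * (m k)^2)"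
      unfolding vv by (intro sum_mono) (simp add: power2_sum, smt (verit) sum_squares_bound)
    then show ?thesis unfolding Phi by (simp add: sum.distrib sum_distrib_left)
  qed
  have key: "\<Phi> P w = (\<Sum>k\<le>d. r k * vv k) - (\<Sum>k\<le>d. r k * m k)"
    unfolding Phi vv by (simp add: algebra_simps power2_eq_square sum.distrib sum_subtractf)
  have "\<Phi> P w \<le> \<eta> * (1 + (2 * \<Phi> P w + 2 * (\<Sum>k\<le>d. (m k)^2))) / 2 + \<eta> * \<bar>S2\<bar>"
  proof -
    have "\<eta> * (1 + (\<Sum>k\<le>d. (vv k)^2)) / 2 \<le> \<eta> * (1 + (2 * \<Phi> P w + 2 * (\<Sum>k\<le>d. (m k)^2))) / 2"
      using vv2 eta by (intro divide_right_mono mult_left_mono) auto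
    moreover have "- (\<Sum>k\<le>d. r k * m k) \<le> \<eta> * \<bar>S2\<bar>"
      using rm eta by (smt (verit) abs_ge_self mult_left_mono)
    ultimately show ?thesis using key F3 by linarith
  qed
  then have "\<Phi> P w * (1 - \<eta>) \<le> \<eta> * A" unfolding A_def by (simp add: field_simps)
  moreover have "\<Phi> P w * (1/2) \<le> \<Phi> P w * (1 - \<eta>)"
    using eta Phi by (intro mult_left_mono) (auto intro!: sum_nonneg)
  ultimately have "\<Phi> P w \<le> \<epsilon>^2" using eta by linarith
  then have "\<bar>r k\<bar> \<le> \<epsilon>" if "k \<le> d" for k
  proof -
    have "(r k)^2 \<le> \<Phi> P w" unfolding Phi by (rule member_le_sum) (use that in auto)
    then have "(r k)^2 \<le> \<epsilon>^2" using \<open>\<Phi> P w \<le> \<epsilon>^2\<close> by simp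
    then show ?thesis using eps by (metis abs_le_square_iff abs_of_pos)
  qed
  then show ?thesis using Pw(1) unfolding adm_def r_def v_def by blast
qed

lemma atomic_dist:
  fixes P :: "real set" and w :: "real \<Rightarrow> real"
  assumes fin: "finite P" and nn: "\<forall>t\<in>P. 0 \<le> w t" and W: "W = (\<Sum>t\<in>P. w t)" "W > 0"
  shows "\<exists>\<mu>. real_distribution \<mu> \<and> (\<forall>f. f \<in> borel_measurable borel \<longrightarrow>
            integrable \<mu> f \<and> (\<integral>t. f t \<partial>\<mu>) = (\<Sum>t\<in>P. w t * f t) / W)"
proof -
  define g where "g t = (if t \<in> P then w t / W else 0)" for t
  have gnn: "\<And>t. 0 \<le> g t" using nn W by (auto simp: g_def)
  have "(\<integral>\<^sup>+t. ennreal (g t) \<partial>count_space UNIV) = (\<Sum>t\<in>P. ennreal (g t))"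
    by (rule nn_integral_count_space') (use fin in \<open>auto simp: g_def\<close>)
  also have "\<dots> = ennreal (\<Sum>t\<in>P. g t)" using gnn by (simp add: sum_ennreal)
  also have "(\<Sum>t\<in>P. g t) = (\<Sum>t\<in>P. w t) / W" by (simp add: g_def sum_divide_distrib)
  also have "\<dots> = 1" using W by simp
  finally have prob: "(\<integral>\<^sup>+t. ennreal (g t) \<partial>count_space UNIV) = 1" by simp
  define q where "q = embed_pmf g"
  have pmfq: "pmf q t = g t" for t unfolding q_def by (rule pmf_embed_pmf[OF gnn prob])
  have setq: "set_pmf q \<subseteq> P" using pmfq by (auto simp: set_pmf_eq g_def)
  then have finq: "finite (set_pmf q)" using fin finite_subset by blast
  define \<mu> where "\<mu> = distr (measure_pmf q) borel (\<lambda>x. x)"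
  have rd: "real_distribution \<mu>"
    unfolding \<mu>_def real_distribution_def real_distribution_axioms_def
    by (auto intro!: prob_space.prob_space_distr prob_space_measure_pmf)
  have "integrable \<mu> f \<and> (\<integral>t. f t \<partial>\<mu>) = (\<Sum>t\<in>P. w t * f t) / W"
    if f: "f \<in> borel_measurable borel" for f :: "real \<Rightarrow> real"
  proof
    show "integrable \<mu> f" unfolding \<mu>_def
      by (subst integrable_distr_eq) (auto simp: f intro!: integrable_measure_pmf_finite finq)
    have "(\<integral>t. f t \<partial>\<mu>) = (\<integral>t. f t \<partial>measure_pmf q)"
      unfolding \<mu>_def by (subst integral_distr) (auto simp: f)
    also have "\<dots> = (\<Sum>t\<in>P. f t * pmf q t)"
      by (rule integral_measure_pmf_real) (use fin setq in auto)
    also have "\<dots> = (\<Sum>t\<in>P. w t * f t) / W"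
      by (simp add: pmfq g_def sum_divide_distrib mult.commute)
    finally show "(\<integral>t. f t \<partial>\<mu>) = (\<Sum>t\<in>P. w t * f t) / W" .
  qed
  then show ?thesis using rd by blast
qed

lemma stieltjes_norm:
  fixes m :: "nat \<Rightarrow> real"
  assumes pos: "\<And>a D. (\<And>t. 0 \<le> t \<Longrightarrow> 0 \<le> (\<Sum>k\<le>D. a k * t^k)) \<Longrightarrow> 0 \<le> (\<Sum>k\<le>D. a k * m k)"
    and m0: "m 0 = 1"
  shows "\<exists>M. real_distribution M \<and> emeasure M {..<0} = 0 \<and>
           (\<forall>k. integrable M (\<lambda>t. t^k) \<and> (\<integral>t. t^k \<partial>M) = m k)"
proof -
  have "\<forall>N::nat. \<exists>P w. finite P \<and> (\<forall>t\<in>P. 0 \<le> t \<and> 0 \<le> w t) \<and>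
          (\<forall>k\<le>2*N+2. \<bar>(\<Sum>t\<in>P. w t * t^k) - m k\<bar> \<le> 1/(2*(real N+1)))"
    using atomic_approx[OF pos] by (simp del: of_nat_Suc)
  then obtain P w where Pw: "\<And>N. finite (P N)" "\<And>N t. t \<in> P N \<Longrightarrow> 0 \<le> t \<and> 0 \<le> w N t"
    "\<And>N k. k \<le> 2*N+2 \<Longrightarrow> \<bar>(\<Sum>t\<in>P N. w N t * t^k) - m k\<bar> \<le> 1/(2*(real N+1))"
    by metis
  define mom where "mom N k = (\<Sum>t\<in>P N. w N t * t^k)" for N k
  define W where "W N = mom N 0" for N
  have momb: "\<bar>mom N k - m k\<bar> \<le> 1/(2*(real N+1))" if "k \<le> 2*N+2" for N k
    using Pw(3)[OF that] unfolding mom_def by simp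
  have W: "W N \<ge> 1/2" for N
  proof -
    have "\<bar>W N - 1\<bar> \<le> 1/(2*(real N+1))" using momb[of 0 N] m0 by (simp add: W_def)
    moreover have "1/(2*(real N+1)) \<le> (1/2::real)" by (simp add: field_simps)
    ultimately show ?thesis by linarith
  qed
  have Wsum: "W N = (\<Sum>t\<in>P N. w N t)" for N by (simp add: W_def mom_def)
  have "\<forall>N. \<exists>\<mu>. real_distribution \<mu> \<and> (\<forall>f. f \<in> borel_measurable borel \<longrightarrow>
            integrable \<mu> f \<and> (\<integral>t. f t \<partial>\<mu>) = (\<Sum>t\<in>P N. w N t * f t) / W N)"
  proof
    fix N show "\<exists>\<mu>. real_distribution \<mu> \<and> (\<forall>f. f \<in> borel_measurable borel \<longrightarrow>
            integrable \<mu> f \<and> (\<integral>t. f t \<partial>\<mu>) = (\<Sum>t\<in>P N. w N t * f t) / W N)"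
      by (rule atomic_dist[OF Pw(1)]) (use Pw(2) W Wsum in \<open>auto intro: less_le_trans[of 0 "1/2"]\<close>)
  qed
  then obtain \<mu> where rd: "\<And>N. real_distribution (\<mu> N)"
    and intmu: "\<And>N f. f \<in> borel_measurable borel \<Longrightarrow> integrable (\<mu> N) f \<and>
                  (\<integral>t. f t \<partial>\<mu> N) = (\<Sum>t\<in>P N. w N t * f t) / W N"
    by metis
  define a where "a N k = mom N k / W N" for N k
  have int_pow: "(\<integral>t. t^k \<partial>\<mu> N) = a N k" for N k
    using intmu[of "\<lambda>t. t^k" N] by (simp add: a_def mom_def)
  have mom_lim: "(\<lambda>N. mom N k) \<longlonglongrightarrow> m k" for k
  proof -
    have "(\<lambda>N. mom N k - m k) \<longlonglongrightarrow> 0"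
    proof (rule Lim_null_comparison)
      show "\<forall>\<^sub>F N in sequentially. norm (mom N k - m k) \<le> 1/(2*(real N+1))"
        using momb[of k] by (auto simp: eventually_sequentially intro!: exI[of _ k])
      have "(\<lambda>N. 1/(2*(real N+1))) = (\<lambda>N. (1/2) * inverse (real N + 1))" by (simp add: field_simps)
      moreover have "(\<lambda>N. (1/2) * inverse (real N + 1)) \<longlonglongrightarrow> (1/2) * 0"
        using tendsto_mult[OF tendsto_const[of "1/2"] LIMSEQ_inverse_real_of_nat] by (simp add: add.commute)
      ultimately show "(\<lambda>N. 1/(2*(real N+1))) \<longlonglongrightarrow> 0" by simp
    qed
    then show ?thesis by (simp add: LIM_zero_iff)
  qed
  have a_lim: "(\<lambda>N. a N k) \<longlonglongrightarrow> m k" for k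
  proof -
    have "(\<lambda>N. mom N k / W N) \<longlonglongrightarrow> m k / m 0"
      unfolding W_def by (intro tendsto_divide mom_lim) (simp add: m0)
    then show ?thesis by (simp add: a_def m0)
  qed
  have a_bdd: "\<exists>B>0. \<forall>N. \<bar>a N k\<bar> \<le> B" for k
  proof -
    have "Bseq (\<lambda>N. a N k)" using a_lim[of k] by (intro convergent_imp_Bseq) (auto simp: convergent_def)
    then show ?thesis by (auto elim!: BseqE)
  qed
  obtain B2 where B2: "B2 > 0" "\<And>N. \<bar>a N 2\<bar> \<le> B2" using a_bdd[of 2] by blast
  have tight: "tight \<mu>"
    unfolding tight_def
  proof (intro conjI allI impI)
    show "real_distribution (\<mu> N)" for N by (rule rd)
    fix \<epsilon> :: real assume eps: "\<epsilon> > 0"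
    define b where "b = sqrt (B2 / \<epsilon>) + 1"
    have b: "b > 0" "b^2 > B2 / \<epsilon>"
    proof -
      have "sqrt (B2 / \<epsilon>) \<ge> 0" using B2 eps by simp
      then show "b > 0" unfolding b_def by linarith
      have "sqrt (B2/\<epsilon>) ^2 = B2/\<epsilon>" using B2 eps by simp
      moreover have "sqrt (B2/\<epsilon>) ^2 < b^2" unfolding b_def
        by (rule power_strict_mono) (use B2 eps in auto)
      ultimately show "b^2 > B2 / \<epsilon>" by simp
    qed
    have "B2 < \<epsilon> * b^2" using b(2) eps by (simp add: pos_divide_less_eq mult.commute)
    then have "B2 / b^2 < \<epsilon>" using b(1) by (simp add: pos_divide_less_eq)
    show "\<exists>a b::real. a < b \<and> (\<forall>n. 1 - \<epsilon> < measure (\<mu> n) {a<..b})"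
    proof -
     have "1 - \<epsilon> < measure (\<mu> N) {-b<..b}" for N
     proof -
      interpret real_distribution "\<mu> N" by (rule rd)
      have ind: "1 - t^2 / b^2 \<le> indicator {-b<..b} t" for t
      proof (cases "t \<in> {-b<..b}")
        case False
        then have "b \<le> \<bar>t\<bar>" by auto
        then have "b^2 \<le> t^2" using b by (metis abs_ge_zero less_le_not_le power2_abs power_mono)
        then show ?thesis using False b by (simp add: field_simps)
      next
        case True then show ?thesis using b by (simp add: field_simps)
      qed
      have "measure (\<mu> N) {-b<..b} = (\<integral>t. indicator {-b<..b} t \<partial>\<mu> N)" by simp
      also have "\<dots> = (\<Sum>t\<in>P N. w N t * indicator {-b<..b} t) / W N"
        using intmu[of "indicator {-b<..b}" N] by simp
      also have "\<dots> \<ge> (\<Sum>t\<in>P N. w N t * (1 - t^2/b^2)) / W N"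
        using W[of N] Pw(2)[of _ N]
        by (intro divide_right_mono sum_mono mult_left_mono ind) (auto intro: order.trans[of 0 "1/2"])
      moreover have "(\<Sum>t\<in>P N. w N t * (1 - t^2/b^2)) / W N = 1 - a N 2 / b^2"
        using W[of N] unfolding a_def mom_def Wsum
        by (simp add: algebra_simps sum_subtractf sum_divide_distrib[symmetric] field_simps)
      moreover have "a N 2 / b^2 \<le> B2 / b^2" using B2(2)[of N] b by (simp add: divide_right_mono)
      ultimately show "1 - \<epsilon> < measure (\<mu> N) {-b<..b}" using \<open>B2 / b^2 < \<epsilon>\<close> by linarith
     qed
     moreover have "-b < b" using b by simp
     ultimately show ?thesis by blast
    qed
  qed
  obtain r M where r: "strict_mono r" and M: "real_distribution M" and wc: "weak_conv_m (\<mu> \<circ> id \<circ> r) M"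
    using tight_imp_convergent_subsubsequence[OF tight, of id] by (auto simp: strict_mono_def)
  interpret M: real_distribution M by (rule M)
  have conv: "(\<lambda>n. \<integral>t. f t \<partial>\<mu> (r n)) \<longlonglongrightarrow> (\<integral>t. f t \<partial>M)"
    if "\<And>x. isCont f x" "\<And>x. norm (f x) \<le> B" for f :: "real \<Rightarrow> real" and B
    using weak_conv_imp_integral_bdd_continuous_conv[of "\<mu> \<circ> id \<circ> r" M f B] rd M wc that by auto
  define fneg where "fneg t = min 1 (max 0 (-t))" for t :: real
  have fneg_cont: "isCont fneg x" for x unfolding fneg_def by (intro continuous_intros)
  have fneg_meas[measurable]: "fneg \<in> borel_measurable borel" unfolding fneg_def by measurable
  have "(\<lambda>n. \<integral>t. fneg t \<partial>\<mu> (r n)) \<longlonglongrightarrow> (\<integral>t. fneg t \<partial>M)"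
  proof -
    have "norm (fneg t) \<le> 1" for t by (simp add: fneg_def)
    then show ?thesis using conv[OF fneg_cont] by blast
  qed
  moreover have "(\<integral>t. fneg t \<partial>\<mu> N) = 0" for N
  proof -
    have "(\<integral>t. fneg t \<partial>\<mu> N) = (\<Sum>t\<in>P N. w N t * fneg t) / W N" using intmu[OF fneg_meas] by simp
    also have "\<dots> = 0" using Pw(2)[of _ N] by (auto simp: fneg_def intro!: sum.neutral)
    finally show ?thesis .
  qed
  ultimately have "(\<lambda>n. 0::real) \<longlonglongrightarrow> (\<integral>t. fneg t \<partial>M)" by simp
  then have "(\<integral>t. fneg t \<partial>M) = 0" using LIMSEQ_unique[OF tendsto_const] by metis
  moreover have "integrable M fneg"
    by (rule M.integrable_const_bound[where B=1]) (auto simp: fneg_def)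
  moreover have "AE t in M. 0 \<le> fneg t" by (simp add: fneg_def)
  ultimately have "AE t in M. fneg t = 0"
    using integral_nonneg_eq_0_iff_AE by blast
  then have AEnn: "AE t in M. 0 \<le> t"
    by eventually_elim (auto simp: fneg_def split: if_splits)
  have supp: "emeasure M {..<0} = 0"
    using AEnn by (subst (asm) AE_iff_measurable[of "{..<0}"]) auto
  have mom: "integrable M (\<lambda>t. t^k) \<and> (\<integral>t. t^k \<partial>M) = m k" for k
  proof -
    obtain Bk where Bk: "Bk > 0" "\<And>N. \<bar>a N (2*k+2)\<bar> \<le> Bk" using a_bdd[of "2*k+2"] by blast
    define h where "h R t = (min R (max t 0))^k" for R t :: real
    have h_cont: "isCont (h R) x" for R x unfolding h_def by (intro continuous_intros)
    have h_meas[measurable]: "h R \<in> borel_measurable borel" for R unfolding h_def by measurable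
    have h_bnd: "norm (h R t) \<le> R^k" if "0 \<le> R" for R t
      unfolding h_def using that by (auto intro!: power_mono simp: abs_if)
    have herr: "\<bar>h R t - t^k\<bar> \<le> t^(2*k+2) / R^(k+2)" if R: "1 \<le> R" and t: "0 \<le> t" for R t
    proof (cases "t \<le> R")
      case True then show ?thesis using t R by (simp add: h_def)
    next
      case False
      then have hR: "h R t = R^k" using R by (simp add: h_def)
      have "R^k \<le> t^k" using False R by (intro power_mono) auto
      moreover have "R^(k+2) \<le> t^(k+2)" using False R by (intro power_mono) auto
      then have X1: "t^k * R^(k+2) \<le> t^k * t^(k+2)" using t by (intro mult_left_mono) auto
      have X2: "t^(2*k+2) = t^k * t^(k+2)"
      proof -
        have "2*k+2 = k + (k+2)" by simp
        then show ?thesis by (simp only: power_add)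
      qed
      have Rp: "R^(k+2) > 0" using R by simp
      have "t^k \<le> t^(2*k+2) / R^(k+2)"
        by (simp only: pos_le_divide_eq[OF Rp] X2 X1)
      moreover have "0 \<le> R^k" using R by simp
      ultimately show ?thesis unfolding hR abs_le_iff by linarith
    qed
    have errN: "\<bar>(\<integral>t. h R t \<partial>\<mu> N) - a N k\<bar> \<le> Bk / R^(k+2)" if R: "1 \<le> R" for R N
    proof -
      have WN: "W N > 0" using W[of N] by linarith
      have Rp: "R^(k+2) > 0" using R by simp
      have i1: "(\<integral>t. h R t \<partial>\<mu> N) = (\<Sum>t\<in>P N. w N t * h R t) / W N"
        using intmu[OF h_meas[of R], of N] by simp
      have "(\<integral>t. h R t \<partial>\<mu> N) - a N k = (\<Sum>t\<in>P N. w N t * (h R t - t^k)) / W N"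
        unfolding i1 a_def mom_def
        by (simp add: diff_divide_distrib[symmetric] sum_subtractf[symmetric] right_diff_distrib)
      moreover have S1: "\<bar>\<Sum>t\<in>P N. w N t * (h R t - t^k)\<bar> \<le> (\<Sum>t\<in>P N. w N t * (t^(2*k+2) / R^(k+2)))"
      proof (rule order.trans[OF sum_abs], rule sum_mono)
        fix t assume t: "t \<in> P N"
        then have t0: "0 \<le> t" and w0: "0 \<le> w N t" using Pw(2) by auto
        have "\<bar>w N t * (h R t - t^k)\<bar> = w N t * \<bar>h R t - t^k\<bar>" using w0 by (simp add: abs_mult)
        also have "\<dots> \<le> w N t * (t^(2*k+2) / R^(k+2))"
          by (rule mult_left_mono[OF herr[OF R t0] w0])
        finally show "\<bar>w N t * (h R t - t^k)\<bar> \<le> w N t * (t^(2*k+2) / R^(k+2))" .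
      qed
      ultimately have "\<bar>(\<integral>t. h R t \<partial>\<mu> N) - a N k\<bar> \<le> (\<Sum>t\<in>P N. w N t * (t^(2*k+2) / R^(k+2))) / W N"
        using WN by (simp add: abs_divide divide_right_mono)
      also have "(\<Sum>t\<in>P N. w N t * (t^(2*k+2) / R^(k+2))) = mom N (2*k+2) / R^(k+2)"
        unfolding mom_def by (simp add: sum_divide_distrib[symmetric])
      also have "mom N (2*k+2) / R^(k+2) / W N = a N (2*k+2) / R^(k+2)"
        unfolding a_def by (simp add: divide_divide_eq_left mult.commute)
      also have "\<dots> \<le> Bk / R^(k+2)" using Bk(2)[of N] Rp by (intro divide_right_mono) auto
      finally show ?thesis .
    qed
    have errM: "\<bar>(\<integral>t. h R t \<partial>M) - m k\<bar> \<le> Bk / R^(k+2)" if R: "1 \<le> R" for R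
    proof -
      have R0: "0 \<le> R" using R by simp
      have ar: "(\<lambda>n. a (r n) k) \<longlonglongrightarrow> m k"
        using LIMSEQ_subseq_LIMSEQ[OF a_lim[of k] r] by (simp add: o_def)
      have ci: "(\<lambda>n. \<integral>t. h R t \<partial>\<mu> (r n)) \<longlonglongrightarrow> (\<integral>t. h R t \<partial>M)"
        by (rule conv[OF h_cont h_bnd[OF R0]])
      have "(\<lambda>n. \<bar>(\<integral>t. h R t \<partial>\<mu> (r n)) - a (r n) k\<bar>) \<longlonglongrightarrow> \<bar>(\<integral>t. h R t \<partial>M) - m k\<bar>"
        by (rule tendsto_rabs[OF tendsto_diff[OF ci ar]])
      then show ?thesis by (rule LIMSEQ_le_const2) (use errN[OF R] in auto)
    qed
    have int_h: "integrable M (h R)" if "0 \<le> R" for R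
      by (rule M.integrable_const_bound[where B="R^k"]) (use h_bnd[OF that] in auto)
    have H1: "\<And>j. integrable M (h (real j + 1))" by (rule int_h) auto
    have H2: "AE t in M. mono (\<lambda>j. h (real j + 1) t)"
      using AEnn
    proof eventually_elim
      case (elim t)
      show ?case unfolding mono_def
      proof (intro allI impI)
        fix i j :: nat assume "i \<le> j"
        then have "min (real i + 1) (max t 0) \<le> min (real j + 1) (max t 0)" by auto
        then show "h (real i + 1) t \<le> h (real j + 1) t"
          unfolding h_def by (intro power_mono) auto
      qed
    qed
    have H3: "AE t in M. (\<lambda>j. h (real j + 1) t) \<longlonglongrightarrow> t^k"
      using AEnn
    proof eventually_elim
      case (elim t)
      obtain N where N: "t \<le> real N" using real_arch_simple by blast
      have "\<forall>j\<ge>N. h (real j + 1) t = t^k"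
      proof (intro allI impI)
        fix j assume "N \<le> j"
        then have "real N \<le> real j" by simp
        then show "h (real j + 1) t = t^k" using N elim by (simp add: h_def min_def max_def)
      qed
      then show ?case
        by (intro tendsto_eventually) (auto simp: eventually_sequentially)
    qed
    have H4: "(\<lambda>j. integral\<^sup>L M (h (real j + 1))) \<longlonglongrightarrow> m k"
    proof -
      have "(\<lambda>j. integral\<^sup>L M (h (real j + 1)) - m k) \<longlonglongrightarrow> 0"
      proof (rule Lim_null_comparison)
        show "\<forall>\<^sub>F j in sequentially. norm (integral\<^sup>L M (h (real j + 1)) - m k) \<le> Bk * inverse (real j + 1)"
        proof (rule always_eventually, rule allI)
          fix j
          have "(real j + 1) \<le> (real j + 1)^(k+2)" by (rule self_le_power) auto
          then have "Bk / (real j + 1)^(k+2) \<le> Bk / (real j + 1)"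
            using Bk by (intro divide_left_mono) auto
          moreover have "norm (integral\<^sup>L M (h (real j + 1)) - m k) \<le> Bk / (real j + 1)^(k+2)"
            using errM[of "real j + 1"] by simp
          ultimately show "norm (integral\<^sup>L M (h (real j + 1)) - m k) \<le> Bk * inverse (real j + 1)"
            by (simp add: divide_inverse)
        qed
        show "(\<lambda>j. Bk * inverse (real j + 1)) \<longlonglongrightarrow> 0"
          using tendsto_mult[OF tendsto_const[of Bk] LIMSEQ_inverse_real_of_nat]
          by (simp add: add.commute)
      qed
      then show ?thesis by (simp add: LIM_zero_iff)
    qed
    have H5: "(\<lambda>t. t^k) \<in> borel_measurable M" by measurable
    show ?thesis
      using integrable_monotone_convergence[OF H1 H2 H3 H4 H5]
            integral_monotone_convergence[OF H1 H2 H3 H4 H5] by simp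
  qed
  show ?thesis using M supp mom by blast
qed

lemma sum_delta_le:
  fixes X :: real and i D :: nat
  assumes "i \<le> D"
  shows "(\<Sum>j\<le>D. (if j = i then X else 0) * f j) = X * f i"
proof -
  have "(\<Sum>j\<le>D. (if j = i then X else 0) * f j) = (\<Sum>j\<le>D. if j = i then X * f j else 0)"
    by (rule sum.cong) auto
  also have "\<dots> = X * f i" using assms by (subst sum.delta) auto
  finally show ?thesis .
qed

lemma stieltjes:
  fixes m :: "nat \<Rightarrow> real"
  assumes pos: "\<And>a D. (\<And>t. 0 \<le> t \<Longrightarrow> 0 \<le> (\<Sum>k\<le>D. a k * t^k)) \<Longrightarrow> 0 \<le> (\<Sum>k\<le>D. a k * m k)"
  shows "\<exists>\<nu>. sets \<nu> = sets borel \<and> emeasure \<nu> {..<0} = 0 \<and>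
           (\<forall>k. integrable \<nu> (\<lambda>t. t^k) \<and> (\<integral>t. t^k \<partial>\<nu>) = m k)"
proof -
  have m0: "m 0 \<ge> 0" using pos[of "\<lambda>_. 1" 0] by simp
  show ?thesis
  proof (cases "m 0 = 0")
    case True
    have mk: "m k = 0" for k
    proof (rule ccontr)
      assume nz: "m k \<noteq> 0"
      define c where "c = - (\<bar>m (2*k)\<bar> + 1) / (2 * m k)"
      define a where "a j = (if j = 0 then c^2 else 0) + (if j = k then 2*c else 0) + (if j = 2*k then 1 else 0)" for j
      have ev: "(\<Sum>j\<le>2*k. a j * f j) = c^2 * f 0 + 2*c * f k + f (2*k)" for f :: "nat \<Rightarrow> real"
        unfolding a_def by (simp add: distrib_right sum.distrib sum_delta_le)
      have "0 \<le> (\<Sum>j\<le>2*k. a j * m j)"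
      proof (rule pos)
        fix t :: real assume "0 \<le> t"
        have "(\<Sum>j\<le>2*k. a j * t^j) = (c + t^k)^2"
          unfolding ev by (simp add: power2_sum power_mult[symmetric] mult.commute)
        then show "0 \<le> (\<Sum>j\<le>2*k. a j * t^j)" by simp
      qed
      also have "\<dots> = 2*c * m k + m (2*k)" unfolding ev True by simp
      also have "2*c*m k = - (\<bar>m (2*k)\<bar> + 1)" using nz unfolding c_def by simp
      finally show False by linarith
    qed
    define \<nu> where "\<nu> = density (return borel (0::real)) (\<lambda>_. ennreal 0)"
    have "sets \<nu> = sets borel" unfolding \<nu>_def by simp
    moreover have "emeasure \<nu> {..<0} = 0" unfolding \<nu>_def by (simp add: emeasure_density)
    moreover have "integrable \<nu> (\<lambda>t. t^k) \<and> (\<integral>t. t^k \<partial>\<nu>) = m k" for k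
    proof
      show "integrable \<nu> (\<lambda>t. t^k)" unfolding \<nu>_def by (subst integrable_density) auto
      show "(\<integral>t. t^k \<partial>\<nu>) = m k" unfolding \<nu>_def mk by (subst integral_density) auto
    qed
    ultimately show ?thesis by blast
  next
    case False
    then have m0p: "m 0 > 0" using m0 by simp
    define m' where "m' k = m k / m 0" for k
    have pos': "0 \<le> (\<Sum>k\<le>D. a k * m' k)" if "\<And>t. 0 \<le> t \<Longrightarrow> 0 \<le> (\<Sum>k\<le>D. a k * t^k)" for a D
    proof -
      have "(\<Sum>k\<le>D. a k * m' k) = (\<Sum>k\<le>D. a k * m k) / m 0"
        unfolding m'_def by (simp add: sum_divide_distrib)
      then show ?thesis using pos[OF that] m0p by simp
    qed
    obtain M where M: "real_distribution M" "emeasure M {..<0} = 0"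
      "\<And>k. integrable M (\<lambda>t. t^k)" "\<And>k. (\<integral>t. t^k \<partial>M) = m' k"
      using stieltjes_norm[of m', OF pos'] m0p by (auto simp: m'_def)
    interpret M: real_distribution M by (rule M(1))
    define \<nu> where "\<nu> = density M (\<lambda>_. m 0)"
    have "sets \<nu> = sets borel" unfolding \<nu>_def by simp
    moreover have "emeasure \<nu> {..<0} = 0"
      unfolding \<nu>_def using M(2) by (simp add: emeasure_density nn_integral_cmult_indicator)
    moreover have "integrable \<nu> (\<lambda>t. t^k) \<and> (\<integral>t. t^k \<partial>\<nu>) = m k" for k
    proof
      show "integrable \<nu> (\<lambda>t. t^k)" unfolding \<nu>_def using M(3)[of k] m0
        by (subst integrable_density) auto
      show "(\<integral>t. t^k \<partial>\<nu>) = m k" unfolding \<nu>_def using M(4)[of k] m0p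
        by (subst integral_density) (auto simp: m'_def)
    qed
    ultimately show ?thesis by blast
  qed
qed

definition le_set :: "('v::finite \<Rightarrow> nat) \<Rightarrow> ('v \<Rightarrow> nat) set" where
  "le_set \<gamma> = {\<alpha>. \<forall>i. \<alpha> i \<le> \<gamma> i}"
definition mbinom :: "('v::finite \<Rightarrow> nat) \<Rightarrow> ('v \<Rightarrow> nat) \<Rightarrow> real" where
  "mbinom \<gamma> \<alpha> = (\<Prod>i\<in>UNIV. real (\<gamma> i choose \<alpha> i))"
definition msub :: "('v \<Rightarrow> nat) \<Rightarrow> ('v \<Rightarrow> nat) \<Rightarrow> ('v \<Rightarrow> nat)" where
  "msub \<gamma> \<alpha> = (\<lambda>i. \<gamma> i - \<alpha> i)"
definition madd :: "('v \<Rightarrow> nat) \<Rightarrow> ('v \<Rightarrow> nat) \<Rightarrow> ('v \<Rightarrow> nat)" where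
  "madd \<alpha> \<beta> = (\<lambda>i. \<alpha> i + \<beta> i)"
definition Lam :: "(('v::finite \<Rightarrow> nat) \<Rightarrow> real) \<Rightarrow> (('v \<Rightarrow> nat) \<Rightarrow> real) \<Rightarrow> real" where
  "Lam s e = (\<Sum>\<alpha>\<in>{\<alpha>. e \<alpha> \<noteq> 0}. s \<alpha> * e \<alpha>)"

lemma le_set_PiE: "le_set \<gamma> = PiE UNIV (\<lambda>i. {..\<gamma> i})"
  by (auto simp: le_set_def PiE_UNIV_domain Pi_def)

lemma finite_le_set[simp]: "finite (le_set (\<gamma>::'v::finite \<Rightarrow> nat))"
  unfolding le_set_PiE by (rule finite_PiE) auto

lemma meval_eq:
  assumes "finite S" "{\<alpha>. c \<alpha> \<noteq> 0} \<subseteq> S"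
  shows "meval c x = (\<Sum>\<alpha>\<in>S. c \<alpha> * monom_eval \<alpha> x)"
  unfolding meval_def by (rule sum.mono_neutral_left) (use assms in auto)

lemma Lam_eq:
  assumes "finite S" "{\<alpha>. e \<alpha> \<noteq> 0} \<subseteq> S"
  shows "Lam s e = (\<Sum>\<alpha>\<in>S. s \<alpha> * e \<alpha>)"
  unfolding Lam_def by (rule sum.mono_neutral_left) (use assms in auto)

lemma monom_eval_madd: "monom_eval (madd \<alpha> \<beta>) x = monom_eval \<alpha> x * monom_eval \<beta> x"
  unfolding monom_eval_def madd_def by (simp add: power_add prod.distrib)

lemma monom_eval_0[simp]: "monom_eval (\<lambda>_. 0) x = 1"
  unfolding monom_eval_def by simp

lemma combo:
  fixes f :: "'i \<Rightarrow> ('v::finite \<Rightarrow> nat)" and a :: "'i \<Rightarrow> real"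
  assumes I: "finite I"
  defines "e \<equiv> (\<lambda>\<alpha>. \<Sum>i\<in>I. if f i = \<alpha> then a i else 0)"
  shows "mpoly e" "meval e x = (\<Sum>i\<in>I. a i * monom_eval (f i) x)" "Lam s e = (\<Sum>i\<in>I. a i * s (f i))"
proof -
  have supp: "{\<alpha>. e \<alpha> \<noteq> 0} \<subseteq> f ` I"
  proof
    fix \<alpha> assume "\<alpha> \<in> {\<alpha>. e \<alpha> \<noteq> 0}"
    then have "(\<Sum>i\<in>I. if f i = \<alpha> then a i else 0) \<noteq> 0" unfolding e_def by simp
    then obtain i where "i \<in> I" "(if f i = \<alpha> then a i else 0) \<noteq> 0"
      by (rule sum.not_neutral_contains_not_neutral)
    then show "\<alpha> \<in> f ` I" by (auto split: if_splits)
  qed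
  have fin: "finite (f ` I)" using I by simp
  show "mpoly e" unfolding mpoly_def using finite_subset[OF supp fin] .
  have "meval e x = (\<Sum>\<alpha>\<in>f ` I. e \<alpha> * monom_eval \<alpha> x)" by (rule meval_eq[OF fin supp])
  also have "\<dots> = (\<Sum>\<alpha>\<in>f ` I. \<Sum>i\<in>I. (if f i = \<alpha> then a i * monom_eval (f i) x else 0))"
    unfolding e_def sum_distrib_right by (intro sum.cong refl) auto
  also have "\<dots> = (\<Sum>i\<in>I. \<Sum>\<alpha>\<in>f ` I. (if f i = \<alpha> then a i * monom_eval (f i) x else 0))"
    by (rule sum.swap)
  also have "\<dots> = (\<Sum>i\<in>I. a i * monom_eval (f i) x)"
    using fin by (intro sum.cong refl) (simp add: sum.delta)
  finally show "meval e x = (\<Sum>i\<in>I. a i * monom_eval (f i) x)" .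
  have "Lam s e = (\<Sum>\<alpha>\<in>f ` I. s \<alpha> * e \<alpha>)" by (rule Lam_eq[OF fin supp])
  also have "\<dots> = (\<Sum>\<alpha>\<in>f ` I. \<Sum>i\<in>I. (if f i = \<alpha> then a i * s (f i) else 0))"
    unfolding e_def sum_distrib_left by (intro sum.cong refl) auto
  also have "\<dots> = (\<Sum>i\<in>I. \<Sum>\<alpha>\<in>f ` I. (if f i = \<alpha> then a i * s (f i) else 0))"
    by (rule sum.swap)
  also have "\<dots> = (\<Sum>i\<in>I. a i * s (f i))"
    using fin by (intro sum.cong refl) (simp add: sum.delta)
  finally show "Lam s e = (\<Sum>i\<in>I. a i * s (f i))" .
qed

lemma monom_binom:
  fixes x z :: "real^'v::finite"
  shows "monom_eval \<gamma> (x + z) = (\<Sum>\<alpha>\<in>le_set \<gamma>. mbinom \<gamma> \<alpha> * monom_eval \<alpha> z * monom_eval (msub \<gamma> \<alpha>) x)"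
proof -
  have "monom_eval \<gamma> (x + z) = (\<Prod>i\<in>UNIV. (z$i + x$i)^(\<gamma> i))"
    unfolding monom_eval_def by (simp add: add.commute)
  also have "\<dots> = (\<Prod>i\<in>UNIV. \<Sum>k\<le>\<gamma> i. real (\<gamma> i choose k) * (z$i)^k * (x$i)^(\<gamma> i - k))"
    by (subst binomial_ring) simp
  also have "\<dots> = (\<Sum>\<alpha>\<in>PiE UNIV (\<lambda>i. {..\<gamma> i}). \<Prod>i\<in>UNIV. real (\<gamma> i choose \<alpha> i) * (z$i)^(\<alpha> i) * (x$i)^(\<gamma> i - \<alpha> i))"
    by (rule prod_sum_PiE) auto
  also have "\<dots> = (\<Sum>\<alpha>\<in>le_set \<gamma>. mbinom \<gamma> \<alpha> * monom_eval \<alpha> z * monom_eval (msub \<gamma> \<alpha>) x)"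
    unfolding le_set_PiE[symmetric] mbinom_def monom_eval_def msub_def
    by (simp add: prod.distrib)
  finally show ?thesis .
qed

lemma mfact_binom:
  assumes "\<alpha> \<in> le_set \<gamma>"
  shows "(\<Prod>i\<in>UNIV. fact (\<gamma> i) / fact (\<gamma> i - \<alpha> i)) / mfact \<alpha> = mbinom \<gamma> \<alpha>"
proof -
  have "(\<Prod>i\<in>UNIV. fact (\<gamma> i) / fact (\<gamma> i - \<alpha> i)) / mfact \<alpha>
        = (\<Prod>i\<in>UNIV. fact (\<gamma> i) / fact (\<gamma> i - \<alpha> i) / fact (\<alpha> i))"
    unfolding mfact_def by (rule prod_dividef[symmetric])
  also have "\<dots> = mbinom \<gamma> \<alpha>"
    unfolding mbinom_def
  proof (rule prod.cong[OF refl])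
    fix i
    have "\<alpha> i \<le> \<gamma> i" using assms by (auto simp: le_set_def)
    then show "fact (\<gamma> i) / fact (\<gamma> i - \<alpha> i) / fact (\<alpha> i) = real (\<gamma> i choose \<alpha> i)"
      by (simp add: binomial_fact)
  qed
  finally show ?thesis .
qed

lemma madd_msub: "\<alpha> \<in> le_set \<gamma> \<Longrightarrow> madd \<alpha> (msub \<gamma> \<alpha>) = \<gamma>"
  by (auto simp: le_set_def madd_def msub_def fun_eq_iff)

lemma msub_madd: "msub (madd \<alpha> \<beta>) \<alpha> = \<beta>"
  by (auto simp: madd_def msub_def fun_eq_iff)

lemma le_set_madd: "\<alpha> \<in> le_set (madd \<alpha> \<beta>)" "\<beta> \<in> le_set (madd \<alpha> \<beta>)"
  by (auto simp: le_set_def madd_def)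

lemma msub_le: "msub \<gamma> \<alpha> \<in> le_set \<gamma>"
  by (auto simp: le_set_def msub_def)

lemma meval_Dop:
  fixes c :: "('v::finite \<Rightarrow> nat) \<Rightarrow> real"
  assumes mp: "mpoly c"
  shows "meval (Dop s c) x = (\<Sum>\<gamma>\<in>{\<gamma>. c \<gamma> \<noteq> 0}. c \<gamma> * (\<Sum>\<alpha>\<in>le_set \<gamma>. s \<alpha> * mbinom \<gamma> \<alpha> * monom_eval (msub \<gamma> \<alpha>) x))"
proof -
  define Sc where "Sc = {\<gamma>. c \<gamma> \<noteq> 0}"
  have finSc: "finite Sc" using mp unfolding mpoly_def Sc_def .
  define A where "A = {\<alpha>. \<exists>\<gamma>. c \<gamma> \<noteq> 0 \<and> (\<forall>i. \<alpha> i \<le> \<gamma> i)}"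
  have A_eq: "A = (\<Union>\<gamma>\<in>Sc. le_set \<gamma>)" unfolding A_def Sc_def le_set_def by auto
  have finA: "finite A" unfolding A_eq using finSc by auto
  define F where "F \<alpha> \<beta> = (\<Prod>i\<in>UNIV. fact (\<alpha> i + \<beta> i) / fact (\<beta> i) :: real)" for \<alpha> \<beta> :: "'v \<Rightarrow> nat"
  define G where "G \<beta> \<alpha> = s \<alpha> / mfact \<alpha> * (c (madd \<alpha> \<beta>) * F \<alpha> \<beta>) * monom_eval \<beta> x" for \<beta> \<alpha>
  have Dop_eq: "Dop s c \<beta> = (\<Sum>\<alpha>\<in>A. s \<alpha> / mfact \<alpha> * (c (madd \<alpha> \<beta>) * F \<alpha> \<beta>))" for \<beta>
    by (simp only: Dop_def A_def mpartial_def F_def madd_def)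
  have suppD: "{\<beta>. Dop s c \<beta> \<noteq> 0} \<subseteq> A"
  proof
    fix \<beta> assume "\<beta> \<in> {\<beta>. Dop s c \<beta> \<noteq> 0}"
    then have "(\<Sum>\<alpha>\<in>A. s \<alpha> / mfact \<alpha> * (c (madd \<alpha> \<beta>) * F \<alpha> \<beta>)) \<noteq> 0"
      unfolding Dop_eq by simp
    then obtain \<alpha> where "\<alpha> \<in> A" "s \<alpha> / mfact \<alpha> * (c (madd \<alpha> \<beta>) * F \<alpha> \<beta>) \<noteq> 0"
      by (rule sum.not_neutral_contains_not_neutral)
    then have "c (madd \<alpha> \<beta>) \<noteq> 0" by auto
    then show "\<beta> \<in> A" unfolding A_def using le_set_madd(2)[of \<beta> \<alpha>] by (auto simp: le_set_def)
  qed
  have "meval (Dop s c) x = (\<Sum>\<beta>\<in>A. Dop s c \<beta> * monom_eval \<beta> x)"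
    by (rule meval_eq[OF finA suppD])
  also have "\<dots> = (\<Sum>\<beta>\<in>A. \<Sum>\<alpha>\<in>A. G \<beta> \<alpha>)"
    unfolding Dop_eq G_def by (simp add: sum_distrib_right)
  also have "\<dots> = (\<Sum>(\<beta>,\<alpha>)\<in>A \<times> A. G \<beta> \<alpha>)"
    by (rule sum.cartesian_product)
  also have "\<dots> = (\<Sum>(\<beta>,\<alpha>)\<in>{(\<beta>,\<alpha>). \<beta> \<in> A \<and> \<alpha> \<in> A \<and> c (madd \<alpha> \<beta>) \<noteq> 0}. G \<beta> \<alpha>)"
    by (rule sum.mono_neutral_right) (use finA in \<open>auto simp: G_def\<close>)
  also have "\<dots> = (\<Sum>(\<gamma>,\<alpha>)\<in>Sigma Sc le_set. c \<gamma> * (s \<alpha> * mbinom \<gamma> \<alpha> * monom_eval (msub \<gamma> \<alpha>) x))"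
  proof (rule sum.reindex_bij_witness[where i = "\<lambda>(\<gamma>,\<alpha>). (msub \<gamma> \<alpha>, \<alpha>)" and j = "\<lambda>(\<beta>,\<alpha>). (madd \<alpha> \<beta>, \<alpha>)"])
    fix a assume "a \<in> {(\<beta>, \<alpha>). \<beta> \<in> A \<and> \<alpha> \<in> A \<and> c (madd \<alpha> \<beta>) \<noteq> 0}"
    then obtain \<beta> \<alpha> where a: "a = (\<beta>, \<alpha>)" "c (madd \<alpha> \<beta>) \<noteq> 0" by auto
    show "(case case a of (\<beta>, \<alpha>) \<Rightarrow> (madd \<alpha> \<beta>, \<alpha>) of (\<gamma>, \<alpha>) \<Rightarrow> (msub \<gamma> \<alpha>, \<alpha>)) = a"
      using a by (simp add: msub_madd)
    show "(case a of (\<beta>, \<alpha>) \<Rightarrow> (madd \<alpha> \<beta>, \<alpha>)) \<in> Sigma Sc le_set"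
      using a le_set_madd by (auto simp: Sc_def)
    define \<gamma> where "\<gamma> = madd \<alpha> \<beta>"
    have ag: "\<alpha> \<in> le_set \<gamma>" unfolding \<gamma>_def by (rule le_set_madd)
    have F: "F \<alpha> \<beta> = (\<Prod>i\<in>UNIV. fact (\<gamma> i) / fact (\<gamma> i - \<alpha> i))"
      unfolding F_def \<gamma>_def madd_def by simp
    have "G \<beta> \<alpha> = c \<gamma> * (s \<alpha> * ((\<Prod>i\<in>UNIV. fact (\<gamma> i) / fact (\<gamma> i - \<alpha> i)) / mfact \<alpha>) * monom_eval \<beta> x)"
      unfolding G_def F \<gamma>_def by simp
    also have "\<dots> = c \<gamma> * (s \<alpha> * mbinom \<gamma> \<alpha> * monom_eval (msub \<gamma> \<alpha>) x)"
    proof -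
      have mg: "msub \<gamma> \<alpha> = \<beta>" unfolding \<gamma>_def by (rule msub_madd)
      show ?thesis unfolding mfact_binom[OF ag] mg by (rule refl)
    qed
    finally show "(case case a of (\<beta>, \<alpha>) \<Rightarrow> (madd \<alpha> \<beta>, \<alpha>) of (\<gamma>, \<alpha>) \<Rightarrow> c \<gamma> * (s \<alpha> * mbinom \<gamma> \<alpha> * monom_eval (msub \<gamma> \<alpha>) x)) =
          (case a of (\<beta>, \<alpha>) \<Rightarrow> G \<beta> \<alpha>)"
      using a unfolding \<gamma>_def by simp
  next
    fix b assume "b \<in> Sigma Sc le_set"
    then obtain \<gamma> \<alpha> where b: "b = (\<gamma>, \<alpha>)" "\<gamma> \<in> Sc" "\<alpha> \<in> le_set \<gamma>" by auto
    show "(case case b of (\<gamma>, \<alpha>) \<Rightarrow> (msub \<gamma> \<alpha>, \<alpha>) of (\<beta>, \<alpha>) \<Rightarrow> (madd \<alpha> \<beta>, \<alpha>)) = b"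
      using b by (simp add: madd_msub)
    show "(case b of (\<gamma>, \<alpha>) \<Rightarrow> (msub \<gamma> \<alpha>, \<alpha>)) \<in> {(\<beta>, \<alpha>). \<beta> \<in> A \<and> \<alpha> \<in> A \<and> c (madd \<alpha> \<beta>) \<noteq> 0}"
      using b msub_le[of \<gamma> \<alpha>] by (auto simp: A_eq madd_msub Sc_def)
  qed
  also have "\<dots> = (\<Sum>\<gamma>\<in>Sc. \<Sum>\<alpha>\<in>le_set \<gamma>. c \<gamma> * (s \<alpha> * mbinom \<gamma> \<alpha> * monom_eval (msub \<gamma> \<alpha>) x))"
    by (rule sum.Sigma[symmetric]) (use finSc in auto)
  also have "\<dots> = (\<Sum>\<gamma>\<in>Sc. c \<gamma> * (\<Sum>\<alpha>\<in>le_set \<gamma>. s \<alpha> * mbinom \<gamma> \<alpha> * monom_eval (msub \<gamma> \<alpha>) x))"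
    by (simp add: sum_distrib_left)
  finally show ?thesis unfolding Sc_def .
qed

definition vupd :: "real^'v \<Rightarrow> 'v \<Rightarrow> real \<Rightarrow> real^'v" where
  "vupd x j t = (\<chi> i. if i = j then t else x$i)"

lemma monom_split:
  fixes x :: "real^'v::finite"
  shows "monom_eval \<beta> x = (x$j)^(\<beta> j) * monom_eval (\<beta>(j:=0)) x"
proof -
  have "monom_eval \<beta> x = (x$j)^(\<beta> j) * (\<Prod>i\<in>UNIV-{j}. (x$i)^(\<beta> i))"
    unfolding monom_eval_def by (subst prod.remove[of UNIV j]) auto
  moreover have "monom_eval (\<beta>(j:=0)) x = (\<Prod>i\<in>UNIV-{j}. (x$i)^(\<beta> i))"
    unfolding monom_eval_def by (subst prod.remove[of UNIV j]) (auto intro!: prod.cong)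
  ultimately show ?thesis by simp
qed

lemma monom_vupd:
  fixes x :: "real^'v::finite"
  assumes "\<alpha> j = 0"
  shows "monom_eval \<alpha> (vupd x j t) = monom_eval \<alpha> x"
  unfolding monom_eval_def vupd_def using assms by (intro prod.cong) auto

lemma meval_zero_fun[simp]: "meval (\<lambda>_. 0) x = 0"
  unfolding meval_def by simp

lemma uniq_aux:
  fixes V :: "'v::finite set"
  assumes "finite V"
  shows "\<forall>c::('v \<Rightarrow> nat) \<Rightarrow> real. mpoly c \<and> (\<forall>\<alpha>. c \<alpha> \<noteq> 0 \<longrightarrow> (\<forall>i. i \<notin> V \<longrightarrow> \<alpha> i = 0))
            \<and> (\<forall>x. meval c x = 0) \<longrightarrow> (\<forall>\<alpha>. c \<alpha> = 0)"
  using assms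
proof (induction V rule: finite_induct)
  case empty
  show ?case
  proof (intro allI impI)
    fix c :: "('v \<Rightarrow> nat) \<Rightarrow> real" and \<alpha>
    assume H: "mpoly c \<and> (\<forall>\<alpha>. c \<alpha> \<noteq> 0 \<longrightarrow> (\<forall>i. i \<notin> {} \<longrightarrow> \<alpha> i = 0)) \<and> (\<forall>x. meval c x = 0)"
    have supp: "{\<alpha>. c \<alpha> \<noteq> 0} \<subseteq> {\<lambda>_. 0}" using H by auto
    have "meval c 0 = c (\<lambda>_. 0)" using meval_eq[OF _ supp] by simp
    then have c0: "c (\<lambda>_. 0) = 0" using H by simp
    show "c \<alpha> = 0"
    proof (cases "\<alpha> = (\<lambda>_. 0)")
      case True then show ?thesis using c0 by simp
    next
      case False then show ?thesis using supp by auto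
    qed
  qed
next
  case (insert j V)
  show ?case
  proof (intro allI impI)
    fix c :: "('v \<Rightarrow> nat) \<Rightarrow> real" and \<beta>
    assume H: "mpoly c \<and> (\<forall>\<alpha>. c \<alpha> \<noteq> 0 \<longrightarrow> (\<forall>i. i \<notin> insert j V \<longrightarrow> \<alpha> i = 0)) \<and> (\<forall>x. meval c x = 0)"
    define Sc where "Sc = {\<alpha>. c \<alpha> \<noteq> 0}"
    have finSc: "finite Sc" using H unfolding Sc_def mpoly_def by simp
    define D where "D = Max (insert 0 ((\<lambda>\<alpha>. \<alpha> j) ` Sc))"
    have Db: "\<alpha> j \<le> D" if "\<alpha> \<in> Sc" for \<alpha>
      unfolding D_def using finSc that by (intro Max_ge) auto
    define ck where "ck k \<alpha> = (if \<alpha> j = 0 then c (\<alpha>(j := k)) else 0)" for k \<alpha>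
    have ck_supp: "{\<alpha>. ck k \<alpha> \<noteq> 0} \<subseteq> (\<lambda>\<beta>. \<beta>(j:=0)) ` {\<beta>\<in>Sc. \<beta> j = k}" for k
    proof
      fix \<alpha> assume "\<alpha> \<in> {\<alpha>. ck k \<alpha> \<noteq> 0}"
      then have a: "\<alpha> j = 0" "c (\<alpha>(j:=k)) \<noteq> 0" by (auto simp: ck_def split: if_splits)
      then have "\<alpha> = (\<alpha>(j:=k))(j:=0)" by (auto simp: fun_eq_iff)
      then show "\<alpha> \<in> (\<lambda>\<beta>. \<beta>(j:=0)) ` {\<beta>\<in>Sc. \<beta> j = k}" using a unfolding Sc_def
        by (intro image_eqI[of _ _ "\<alpha>(j:=k)"]) auto
    qed
    have finI: "finite ((\<lambda>\<beta>. \<beta>(j:=0)) ` {\<beta>\<in>Sc. \<beta> j = k})" for k using finSc by simp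
    have ck_mp: "mpoly (ck k)" for k unfolding mpoly_def using finite_subset[OF ck_supp finI] .
    have ck_vars: "\<forall>i. i \<notin> V \<longrightarrow> \<alpha> i = 0" if "ck k \<alpha> \<noteq> 0" for k \<alpha>
    proof (intro allI impI)
      fix i assume i: "i \<notin> V"
      from that have a: "\<alpha> j = 0" "c (\<alpha>(j:=k)) \<noteq> 0" by (auto simp: ck_def split: if_splits)
      show "\<alpha> i = 0"
      proof (cases "i = j")
        case True then show ?thesis using a by simp
      next
        case False
        then have "(\<alpha>(j:=k)) i = 0" using H a(2) i by blast
        then show ?thesis using False by simp
      qed
    qed
    have ck_eval: "meval (ck k) x = (\<Sum>\<beta>\<in>{\<beta>\<in>Sc. \<beta> j = k}. c \<beta> * monom_eval (\<beta>(j:=0)) x)" for k x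
    proof -
      have "meval (ck k) x = (\<Sum>\<alpha>\<in>(\<lambda>\<beta>. \<beta>(j:=0)) ` {\<beta>\<in>Sc. \<beta> j = k}. ck k \<alpha> * monom_eval \<alpha> x)"
        by (rule meval_eq[OF finI ck_supp])
      also have "\<dots> = (\<Sum>\<beta>\<in>{\<beta>\<in>Sc. \<beta> j = k}. ck k (\<beta>(j:=0)) * monom_eval (\<beta>(j:=0)) x)"
      proof (rule sum.reindex[unfolded comp_def])
        show "inj_on (\<lambda>\<beta>. \<beta>(j:=0)) {\<beta>\<in>Sc. \<beta> j = k}"
        proof (rule inj_onI)
          fix \<beta>1 \<beta>2 assume "\<beta>1 \<in> {\<beta>\<in>Sc. \<beta> j = k}" "\<beta>2 \<in> {\<beta>\<in>Sc. \<beta> j = k}" "\<beta>1(j:=0) = \<beta>2(j:=0)"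
          then show "\<beta>1 = \<beta>2" by (auto simp: fun_eq_iff) (metis fun_upd_apply)
        qed
      qed
      also have "\<dots> = (\<Sum>\<beta>\<in>{\<beta>\<in>Sc. \<beta> j = k}. c \<beta> * monom_eval (\<beta>(j:=0)) x)"
      proof (rule sum.cong[OF refl])
        fix \<beta> assume "\<beta> \<in> {\<beta>\<in>Sc. \<beta> j = k}"
        then have "(\<beta>(j:=0))(j:=k) = \<beta>" by (auto simp: fun_eq_iff)
        then show "ck k (\<beta>(j:=0)) * monom_eval (\<beta>(j:=0)) x = c \<beta> * monom_eval (\<beta>(j:=0)) x"
          by (simp add: ck_def)
      qed
      finally show ?thesis .
    qed
    have expand: "meval c x = (\<Sum>k\<le>D. (x$j)^k * meval (ck k) x)" for x
    proof -
      have "meval c x = (\<Sum>\<beta>\<in>Sc. c \<beta> * monom_eval \<beta> x)" unfolding meval_def Sc_def ..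
      also have "\<dots> = (\<Sum>k\<le>D. \<Sum>\<beta>\<in>{\<beta>\<in>Sc. \<beta> j = k}. c \<beta> * monom_eval \<beta> x)"
        by (rule sum.group[symmetric]) (use finSc Db in auto)
      also have "\<dots> = (\<Sum>k\<le>D. (x$j)^k * meval (ck k) x)"
      proof (rule sum.cong[OF refl])
        fix k
        have "(\<Sum>\<beta>\<in>{\<beta>\<in>Sc. \<beta> j = k}. c \<beta> * monom_eval \<beta> x)
              = (\<Sum>\<beta>\<in>{\<beta>\<in>Sc. \<beta> j = k}. (x$j)^k * (c \<beta> * monom_eval (\<beta>(j:=0)) x))"
          by (rule sum.cong[OF refl]) (subst monom_split[of _ _ j], auto)
        also have "\<dots> = (x$j)^k * meval (ck k) x" unfolding ck_eval by (simp add: sum_distrib_left)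
        finally show "(\<Sum>\<beta>\<in>{\<beta>\<in>Sc. \<beta> j = k}. c \<beta> * monom_eval \<beta> x) = (x$j)^k * meval (ck k) x" .
      qed
      finally show ?thesis .
    qed
    have ck_upd: "meval (ck k) (vupd x j t) = meval (ck k) x" for k x t
      unfolding meval_def
    proof (rule sum.cong[OF refl])
      fix \<alpha> assume "\<alpha> \<in> {\<alpha>. ck k \<alpha> \<noteq> 0}"
      then have "\<alpha> j = 0" by (auto simp: ck_def split: if_splits)
      then show "ck k \<alpha> * monom_eval \<alpha> (vupd x j t) = ck k \<alpha> * monom_eval \<alpha> x" by (simp add: monom_vupd)
    qed
    have ck0: "meval (ck k) x = 0" for k x
    proof (cases "k \<le> D")
      case True
      have "\<forall>t. (\<Sum>k\<le>D. meval (ck k) x * t^k) = 0"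
      proof
        fix t
        have "0 = meval c (vupd x j t)" using H by simp
        also have "\<dots> = (\<Sum>k\<le>D. t^k * meval (ck k) x)" unfolding expand ck_upd by (simp add: vupd_def)
        finally show "(\<Sum>k\<le>D. meval (ck k) x * t^k) = 0" by (simp add: mult.commute)
      qed
      then show ?thesis using True polyfun_eq_0[of "\<lambda>k. meval (ck k) x" D] by blast
    next
      case False
      have "ck k = (\<lambda>_. 0)"
      proof
        fix \<alpha> show "ck k \<alpha> = 0"
        proof (rule ccontr)
          assume "ck k \<alpha> \<noteq> 0"
          then have "\<alpha>(j:=k) \<in> Sc" by (auto simp: ck_def Sc_def split: if_splits)
          then have "k \<le> D" using Db by fastforce
          then show False using False by simp
        qed
      qed
      then show ?thesis by simp
    qed
    have "\<forall>\<alpha>. ck k \<alpha> = 0" for k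
      using insert.IH ck_mp ck_vars ck0 by blast
    moreover have "c \<beta> = ck (\<beta> j) (\<beta>(j:=0))"
    proof -
      have "(\<beta>(j:=0))(j:=\<beta> j) = \<beta>" by (auto simp: fun_eq_iff)
      then show ?thesis by (simp add: ck_def)
    qed
    ultimately show "c \<beta> = 0" by simp
  qed
qed

lemma mpoly_unique:
  fixes c :: "('v::finite \<Rightarrow> nat) \<Rightarrow> real"
  assumes "mpoly c" "\<And>x. meval c x = 0"
  shows "c \<alpha> = 0"
  using uniq_aux[of "UNIV :: 'v set"] assms by auto

definition polyfun :: "(real^'v::finite \<Rightarrow> real) \<Rightarrow> bool" where
  "polyfun g \<longleftrightarrow> (\<exists>c. mpoly c \<and> (\<forall>x. g x = meval c x))"

lemma polyfun_smonom: "polyfun (\<lambda>x. a * monom_eval \<alpha> x)"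
proof -
  let ?e = "\<lambda>\<beta>. \<Sum>i\<in>{0::nat}. if (\<lambda>_. \<alpha>) i = \<beta> then (\<lambda>_. a) i else 0"
  have "mpoly ?e" "\<And>x. meval ?e x = (\<Sum>i\<in>{0::nat}. (\<lambda>_. a) i * monom_eval ((\<lambda>_. \<alpha>) i) x)"
    by (rule combo(1), simp) (rule combo(2), simp)
  then show ?thesis unfolding polyfun_def by (intro exI[of _ ?e]) auto
qed

lemma polyfun_const: "polyfun (\<lambda>x. a)"
  using polyfun_smonom[of a "\<lambda>_. 0"] by simp

lemma polyfun_add:
  assumes "polyfun f" "polyfun g"
  shows "polyfun (\<lambda>x. f x + g x)"
proof -
  obtain c1 c2 where c: "mpoly c1" "\<And>x. f x = meval c1 x" "mpoly c2" "\<And>x. g x = meval c2 x"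
    using assms unfolding polyfun_def by blast
  define S where "S = {\<alpha>. c1 \<alpha> \<noteq> 0} \<union> {\<alpha>. c2 \<alpha> \<noteq> 0}"
  have finS: "finite S" using c unfolding S_def mpoly_def by simp
  define c where "c \<alpha> = c1 \<alpha> + c2 \<alpha>" for \<alpha>
  have supp: "{\<alpha>. c \<alpha> \<noteq> 0} \<subseteq> S" unfolding S_def c_def by auto
  have "mpoly c" unfolding mpoly_def using finite_subset[OF supp finS] .
  moreover have "f x + g x = meval c x" for x
  proof -
    have "f x = (\<Sum>\<alpha>\<in>S. c1 \<alpha> * monom_eval \<alpha> x)" unfolding c(2) by (rule meval_eq[OF finS]) (auto simp: S_def)
    moreover have "g x = (\<Sum>\<alpha>\<in>S. c2 \<alpha> * monom_eval \<alpha> x)" unfolding c(4) by (rule meval_eq[OF finS]) (auto simp: S_def)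
    moreover have "meval c x = (\<Sum>\<alpha>\<in>S. c \<alpha> * monom_eval \<alpha> x)" by (rule meval_eq[OF finS supp])
    ultimately show ?thesis by (simp add: c_def distrib_right sum.distrib)
  qed
  ultimately show ?thesis unfolding polyfun_def by blast
qed

lemma polyfun_sum:
  assumes "finite I" "\<And>i. i \<in> I \<Longrightarrow> polyfun (f i)"
  shows "polyfun (\<lambda>x. \<Sum>i\<in>I. f i x)"
  using assms
proof (induction I rule: finite_induct)
  case empty then show ?case using polyfun_const[of 0] by simp
next
  case (insert i I)
  then show ?case by (simp add: polyfun_add)
qed

lemma polyfun_cmult:
  assumes "polyfun f" shows "polyfun (\<lambda>x. a * f x)"
proof -
  obtain c where c: "mpoly c" "\<And>x. f x = meval c x" using assms unfolding polyfun_def by blast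
  have "a * f x = (\<Sum>\<alpha>\<in>{\<alpha>. c \<alpha> \<noteq> 0}. (a * c \<alpha>) * monom_eval \<alpha> x)" for x
    unfolding c(2) meval_def by (simp add: sum_distrib_left mult.assoc)
  moreover have "polyfun (\<lambda>x. \<Sum>\<alpha>\<in>{\<alpha>. c \<alpha> \<noteq> 0}. (a * c \<alpha>) * monom_eval \<alpha> x)"
    using c(1) unfolding mpoly_def by (intro polyfun_sum polyfun_smonom) auto
  ultimately show ?thesis by simp
qed

lemma polyfun_mult:
  assumes "polyfun f" "polyfun g"
  shows "polyfun (\<lambda>x. f x * g x)"
proof -
  obtain c1 c2 where c: "mpoly c1" "\<And>x. f x = meval c1 x" "mpoly c2" "\<And>x. g x = meval c2 x"
    using assms unfolding polyfun_def by blast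
  define S1 where "S1 = {\<alpha>. c1 \<alpha> \<noteq> 0}"
  define S2 where "S2 = {\<alpha>. c2 \<alpha> \<noteq> 0}"
  have fin: "finite S1" "finite S2" using c unfolding S1_def S2_def mpoly_def by auto
  have "f x * g x = (\<Sum>\<alpha>\<in>S1. \<Sum>\<beta>\<in>S2. (c1 \<alpha> * c2 \<beta>) * monom_eval (madd \<alpha> \<beta>) x)" for x
    unfolding c(2) c(4) meval_def S1_def[symmetric] S2_def[symmetric] sum_product monom_eval_madd
    by (simp add: algebra_simps)
  moreover have "polyfun (\<lambda>x. \<Sum>\<alpha>\<in>S1. \<Sum>\<beta>\<in>S2. (c1 \<alpha> * c2 \<beta>) * monom_eval (madd \<alpha> \<beta>) x)"
    using fin by (intro polyfun_sum polyfun_smonom) auto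
  ultimately show ?thesis by simp
qed

lemma polyfun_coord:
  fixes i :: "'v::finite"
  shows "polyfun (\<lambda>x::real^'v. x$i)"
proof -
  have "monom_eval (\<lambda>j. if j = i then 1 else 0) x = x$i" for x :: "real^'v"
  proof -
    have "monom_eval (\<lambda>j. if j = i then 1 else 0) x = (\<Prod>j\<in>UNIV. if j = i then x$j else 1)"
      unfolding monom_eval_def by (intro prod.cong) auto
    then show ?thesis by (simp add: prod.delta)
  qed
  then show ?thesis using polyfun_smonom[of 1 "\<lambda>j. if j = i then 1 else 0"] by simp
qed

lemma polyfun_pow: "polyfun f \<Longrightarrow> polyfun (\<lambda>x. (f x)^n)"
  by (induction n) (auto simp: polyfun_const polyfun_mult)

lemma polyfun_prod:
  assumes "finite I" "\<And>i. i \<in> I \<Longrightarrow> polyfun (f i)"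
  shows "polyfun (\<lambda>x. \<Prod>i\<in>I. f i x)"
  using assms
proof (induction I rule: finite_induct)
  case empty then show ?case using polyfun_const[of 1] by simp
next
  case (insert i I)
  then show ?case by (simp add: polyfun_mult)
qed

lemma polyfun_translate:
  fixes x :: "real^'v::finite"
  assumes "mpoly e"
  shows "polyfun (\<lambda>y. meval e (y - x))"
proof -
  have "meval e (y - x) = (\<Sum>\<gamma>\<in>{\<gamma>. e \<gamma> \<noteq> 0}. e \<gamma> * (\<Prod>i\<in>UNIV. (y$i + (- x$i))^(\<gamma> i)))" for y
    unfolding meval_def monom_eval_def by simp
  moreover have "polyfun (\<lambda>y. \<Sum>\<gamma>\<in>{\<gamma>. e \<gamma> \<noteq> 0}. e \<gamma> * (\<Prod>i\<in>UNIV. (y$i + (- x$i))^(\<gamma> i)))"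
    using assms unfolding mpoly_def
    by (intro polyfun_sum polyfun_cmult polyfun_prod polyfun_pow polyfun_add polyfun_coord polyfun_const) auto
  ultimately show ?thesis by simp
qed

lemma pos_transfer:
  fixes K :: "(real^'v::finite) set" and e :: "('v \<Rightarrow> nat) \<Rightarrow> real"
  assumes pp: "pos_preserver K (Dop s)" and xK: "x \<in> K" and mp: "mpoly e"
    and nn: "\<And>z. x + z \<in> K \<Longrightarrow> 0 \<le> meval e z"
  shows "0 \<le> Lam s e"
proof -
  obtain c where mpc: "mpoly c" and hc: "\<And>y. meval e (y - x) = meval c y"
    using polyfun_translate[OF mp, of x] unfolding polyfun_def by blast
  have cK: "\<forall>y\<in>K. 0 \<le> meval c y"
  proof
    fix y assume "y \<in> K"
    then have "x + (y - x) \<in> K" by simp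
    then show "0 \<le> meval c y" using nn hc by metis
  qed
  have D0: "0 \<le> meval (Dop s c) x" using pp mpc cK xK unfolding pos_preserver_def by blast
  define Sc where "Sc = {\<gamma>. c \<gamma> \<noteq> 0}"
  have finSc: "finite Sc" using mpc unfolding mpoly_def Sc_def .
  define A where "A = (\<Union>\<gamma>\<in>Sc. le_set \<gamma>)"
  have finA: "finite A" unfolding A_def using finSc by simp
  define e' where "e' \<alpha> = (\<Sum>\<gamma>\<in>Sc. c \<gamma> * (if \<alpha> \<in> le_set \<gamma> then mbinom \<gamma> \<alpha> * monom_eval (msub \<gamma> \<alpha>) x else 0))" for \<alpha>
  have supp': "{\<alpha>. e' \<alpha> \<noteq> 0} \<subseteq> A"
  proof
    fix \<alpha> assume "\<alpha> \<in> {\<alpha>. e' \<alpha> \<noteq> 0}"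
    then have "e' \<alpha> \<noteq> 0" by simp
    then obtain \<gamma> where "\<gamma> \<in> Sc" "c \<gamma> * (if \<alpha> \<in> le_set \<gamma> then mbinom \<gamma> \<alpha> * monom_eval (msub \<gamma> \<alpha>) x else 0) \<noteq> 0"
      unfolding e'_def by (rule sum.not_neutral_contains_not_neutral)
    then show "\<alpha> \<in> A" unfolding A_def by (auto split: if_splits)
  qed
  have mp': "mpoly e'" unfolding mpoly_def using finite_subset[OF supp' finA] .
  have swap: "(\<Sum>\<alpha>\<in>A. g \<alpha> * e' \<alpha>) = (\<Sum>\<gamma>\<in>Sc. c \<gamma> * (\<Sum>\<alpha>\<in>le_set \<gamma>. g \<alpha> * (mbinom \<gamma> \<alpha> * monom_eval (msub \<gamma> \<alpha>) x)))"
    for g :: "('v \<Rightarrow> nat) \<Rightarrow> real"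
  proof -
    have "(\<Sum>\<alpha>\<in>A. g \<alpha> * e' \<alpha>) = (\<Sum>\<alpha>\<in>A. \<Sum>\<gamma>\<in>Sc. c \<gamma> * (if \<alpha> \<in> le_set \<gamma> then g \<alpha> * (mbinom \<gamma> \<alpha> * monom_eval (msub \<gamma> \<alpha>) x) else 0))"
      unfolding e'_def sum_distrib_left by (intro sum.cong refl) auto
    also have "\<dots> = (\<Sum>\<gamma>\<in>Sc. \<Sum>\<alpha>\<in>A. c \<gamma> * (if \<alpha> \<in> le_set \<gamma> then g \<alpha> * (mbinom \<gamma> \<alpha> * monom_eval (msub \<gamma> \<alpha>) x) else 0))"
      by (rule sum.swap)
    also have "\<dots> = (\<Sum>\<gamma>\<in>Sc. c \<gamma> * (\<Sum>\<alpha>\<in>le_set \<gamma>. g \<alpha> * (mbinom \<gamma> \<alpha> * monom_eval (msub \<gamma> \<alpha>) x)))"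
    proof (rule sum.cong[OF refl])
      fix \<gamma> assume g: "\<gamma> \<in> Sc"
      have sub: "le_set \<gamma> \<subseteq> A" unfolding A_def using g by auto
      have "(\<Sum>\<alpha>\<in>A. c \<gamma> * (if \<alpha> \<in> le_set \<gamma> then g \<alpha> * (mbinom \<gamma> \<alpha> * monom_eval (msub \<gamma> \<alpha>) x) else 0))
            = c \<gamma> * (\<Sum>\<alpha>\<in>A. (if \<alpha> \<in> le_set \<gamma> then g \<alpha> * (mbinom \<gamma> \<alpha> * monom_eval (msub \<gamma> \<alpha>) x) else 0))"
        by (simp add: sum_distrib_left)
      also have "(\<Sum>\<alpha>\<in>A. (if \<alpha> \<in> le_set \<gamma> then g \<alpha> * (mbinom \<gamma> \<alpha> * monom_eval (msub \<gamma> \<alpha>) x) else 0))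
            = (\<Sum>\<alpha>\<in>A \<inter> le_set \<gamma>. g \<alpha> * (mbinom \<gamma> \<alpha> * monom_eval (msub \<gamma> \<alpha>) x))"
        by (rule sum.inter_restrict[symmetric]) (rule finA)
      also have "A \<inter> le_set \<gamma> = le_set \<gamma>" using sub by auto
      finally show "(\<Sum>\<alpha>\<in>A. c \<gamma> * (if \<alpha> \<in> le_set \<gamma> then g \<alpha> * (mbinom \<gamma> \<alpha> * monom_eval (msub \<gamma> \<alpha>) x) else 0))
            = c \<gamma> * (\<Sum>\<alpha>\<in>le_set \<gamma>. g \<alpha> * (mbinom \<gamma> \<alpha> * monom_eval (msub \<gamma> \<alpha>) x))" .
    qed
    finally show ?thesis .
  qed
  have Lam': "Lam s e' = meval (Dop s c) x"
  proof -
    have "Lam s e' = (\<Sum>\<alpha>\<in>A. s \<alpha> * e' \<alpha>)" by (rule Lam_eq[OF finA supp'])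
    also have "\<dots> = meval (Dop s c) x" unfolding swap meval_Dop[OF mpc] Sc_def
      by (simp add: mult.assoc)
    finally show ?thesis .
  qed
  have ev': "meval e' z = meval e z" for z
  proof -
    have "meval e' z = (\<Sum>\<alpha>\<in>A. e' \<alpha> * monom_eval \<alpha> z)" by (rule meval_eq[OF finA supp'])
    also have "\<dots> = (\<Sum>\<alpha>\<in>A. monom_eval \<alpha> z * e' \<alpha>)" by (simp add: mult.commute)
    also have "\<dots> = (\<Sum>\<gamma>\<in>Sc. c \<gamma> * (\<Sum>\<alpha>\<in>le_set \<gamma>. monom_eval \<alpha> z * (mbinom \<gamma> \<alpha> * monom_eval (msub \<gamma> \<alpha>) x)))"
      by (rule swap)
    also have "\<dots> = (\<Sum>\<gamma>\<in>Sc. c \<gamma> * monom_eval \<gamma> (x + z))"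
      unfolding monom_binom by (intro sum.cong refl arg_cong[where f="\<lambda>t. c _ * t"] ) (simp add: algebra_simps)
    also have "\<dots> = meval c (x + z)" unfolding meval_def Sc_def ..
    also have "\<dots> = meval e z" using hc[of "x + z"] by simp
    finally show ?thesis .
  qed
  have "e' \<alpha> = e \<alpha>" for \<alpha>
  proof -
    have mpd: "mpoly (\<lambda>\<alpha>. e' \<alpha> - e \<alpha>)"
    proof -
      have "{\<alpha>. e' \<alpha> - e \<alpha> \<noteq> 0} \<subseteq> {\<alpha>. e' \<alpha> \<noteq> 0} \<union> {\<alpha>. e \<alpha> \<noteq> 0}" by auto
      moreover have "finite ({\<alpha>. e' \<alpha> \<noteq> 0} \<union> {\<alpha>. e \<alpha> \<noteq> 0})" using mp mp' unfolding mpoly_def by simp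
      ultimately show ?thesis unfolding mpoly_def by (rule finite_subset)
    qed
    have "meval (\<lambda>\<alpha>. e' \<alpha> - e \<alpha>) z = 0" for z
    proof -
      define S where "S = {\<alpha>. e' \<alpha> \<noteq> 0} \<union> {\<alpha>. e \<alpha> \<noteq> 0}"
      have finS: "finite S" using mp mp' unfolding mpoly_def S_def by simp
      have "meval (\<lambda>\<alpha>. e' \<alpha> - e \<alpha>) z = (\<Sum>\<alpha>\<in>S. (e' \<alpha> - e \<alpha>) * monom_eval \<alpha> z)"
        by (rule meval_eq[OF finS]) (auto simp: S_def)
      also have "\<dots> = (\<Sum>\<alpha>\<in>S. e' \<alpha> * monom_eval \<alpha> z) - (\<Sum>\<alpha>\<in>S. e \<alpha> * monom_eval \<alpha> z)"
        by (simp add: left_diff_distrib sum_subtractf)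
      also have "(\<Sum>\<alpha>\<in>S. e' \<alpha> * monom_eval \<alpha> z) = meval e' z"
        by (rule meval_eq[symmetric, OF finS]) (auto simp: S_def)
      also have "(\<Sum>\<alpha>\<in>S. e \<alpha> * monom_eval \<alpha> z) = meval e z"
        by (rule meval_eq[symmetric, OF finS]) (auto simp: S_def)
      finally show ?thesis using ev' by simp
    qed
    then have "e' \<alpha> - e \<alpha> = 0" using mpoly_unique[OF mpd] by blast
    then show ?thesis by simp
  qed
  then have "e' = e" by auto
  then show ?thesis using Lam' D0 by simp
qed

lemma vnth_cont: "continuous_on S (\<lambda>x::real^'v. x$i)"
  by (rule linear_continuous_on[OF bounded_linear_vec_nth])

lemma monom_cont: "continuous_on S (monom_eval \<alpha> :: real^'v::finite \<Rightarrow> real)"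
  unfolding monom_eval_def by (intro continuous_intros vnth_cont)

lemma monom_meas[measurable]: "monom_eval \<alpha> \<in> borel_measurable borel"
  by (rule borel_measurable_continuous_onI[OF monom_cont])

lemma monom_coord:
  fixes i :: "'v::finite"
  shows "monom_eval (\<lambda>j. if j = i then 1 else 0) (x::real^'v) = x$i"
proof -
  have "monom_eval (\<lambda>j. if j = i then 1 else 0) x = (\<Prod>j\<in>UNIV. if j = i then x$j else 1)"
    unfolding monom_eval_def by (intro prod.cong) auto
  then show ?thesis by (simp add: prod.delta)
qed

lemma monom_pow:
  fixes i :: "'v::finite"
  shows "monom_eval (\<lambda>j. if j = i then k else 0) (x::real^'v) = (x$i)^k"
proof -
  have "monom_eval (\<lambda>j. if j = i then k else 0) x = (\<Prod>j\<in>UNIV. if j = i then (x$j)^k else 1)"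
    unfolding monom_eval_def by (intro prod.cong) auto
  then show ?thesis by (simp add: prod.delta)
qed

definition embC :: "real^'n \<Rightarrow> real \<Rightarrow> real^('n option)" where
  "embC c t = (\<chi> i. case i of None \<Rightarrow> t | Some j \<Rightarrow> c$j)"

lemma embC_proj[simp]: "(\<chi> i. embC c t $ Some i) = c" "embC c t $ None = t" "embC c t $ Some j = c $ j"
  by (auto simp: embC_def vec_eq_iff)

theorem theorem4p17:
  fixes C :: "(real^'n) set" and s :: "('n option \<Rightarrow> nat) \<Rightarrow> real"
  assumes "C \<noteq> {}" and "compact C"
  defines "K \<equiv> {x :: real^('n option). (\<chi> i. x $ Some i) \<in> C \<and> x $ None \<ge> 0}"
  shows "pos_preserver K (Dop s) \<longleftrightarrow> moment_seq (Ksharp K) s"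
proof -
  note Cne = assms(1) and Cc = assms(2)
  have Kmem: "x \<in> K \<longleftrightarrow> (\<chi> i. x $ Some i) \<in> C \<and> x $ None \<ge> 0" for x
    unfolding K_def by simp
  have embK: "embC c t \<in> K" if "c \<in> C" "0 \<le> t" for c t
    using that by (simp add: Kmem)
  obtain c0 where c0: "c0 \<in> C" using Cne by blast
  define x0 where "x0 = embC c0 0"
  have x0K: "x0 \<in> K" unfolding x0_def by (rule embK[OF c0]) simp
  define Ls where "Ls = {x :: real^('n option). (\<forall>j. x $ Some j = 0) \<and> 0 \<le> x $ None}"
  have Ks: "Ksharp K = Ls"
  proof
    show "Ls \<subseteq> Ksharp K"
    proof
      fix y assume y: "y \<in> Ls"
      have "y + x \<in> K" if "x \<in> K" for x
      proof -
        have "(\<chi> i. (y + x) $ Some i) = (\<chi> i. x $ Some i)" using y by (simp add: Ls_def vec_eq_iff)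
        then show ?thesis using that y by (simp add: Kmem Ls_def)
      qed
      then show "y \<in> Ksharp K" unfolding Ksharp_def by auto
    qed
  next
    show "Ksharp K \<subseteq> Ls"
    proof
      fix y assume y: "y \<in> Ksharp K"
      then have yK: "y + x \<in> K" if "x \<in> K" for x using that unfolding Ksharp_def by auto
      have "y $ None \<ge> 0" using yK[OF x0K] by (simp add: Kmem x0_def)
      define v where "v = (\<chi> i. y $ Some i)"
      have vC: "v + c \<in> C" if "c \<in> C" for c
      proof -
        have "y + embC c 0 \<in> K" using yK embK[OF that] by simp
        moreover have "(\<chi> i. (y + embC c 0) $ Some i) = v + c" by (simp add: v_def vec_eq_iff)
        ultimately show ?thesis by (simp add: Kmem)
      qed
      obtain cs where cs: "cs \<in> C" "\<And>c. c \<in> C \<Longrightarrow> inner v c \<le> inner v cs"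
      proof -
        have "continuous_on C (\<lambda>c. inner v c)" by (intro continuous_intros)
        then show ?thesis using continuous_attains_sup[OF Cc Cne, of "\<lambda>c. inner v c"] that by blast
      qed
      have "inner v (v + cs) \<le> inner v cs" using cs vC by blast
      then have "inner v v \<le> 0" by (simp add: inner_add_right)
      then have "v = 0" by (metis inner_eq_zero_iff inner_ge_zero order_antisym)
      then have "y $ Some j = 0" for j by (metis v_def vec_lambda_beta zero_index)
      then show "y \<in> Ls" unfolding Ls_def using \<open>y $ None \<ge> 0\<close> by simp
    qed
  qed
  have Lclosed: "closed Ls"
  proof -
    have "Ls = {x. \<forall>j. x $ Some j = 0} \<inter> {x. 0 \<le> x $ None}" unfolding Ls_def by auto
    moreover have "closed {x::real^('n option). \<forall>j. x $ Some j = 0}"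
      by (intro closed_Collect_all closed_Collect_eq vnth_cont continuous_on_const)
    moreover have "closed {x::real^('n option). 0 \<le> x $ None}"
      by (intro closed_Collect_le vnth_cont continuous_on_const)
    ultimately show ?thesis by auto
  qed
  then have Lborel: "Ls \<in> sets borel" by simp
  show ?thesis
  proof
    assume pp: "pos_preserver K (Dop s)"
    define kN where "kN k = (\<lambda>i::'n option. if i = None then k else 0)" for k :: nat
    have pos1: "0 \<le> (\<Sum>k\<le>D. a k * s (kN k))" if H: "\<And>t. 0 \<le> t \<Longrightarrow> 0 \<le> (\<Sum>k\<le>D. a k * t^k)" for a D
    proof -
      define e where "e = (\<lambda>\<alpha>. \<Sum>k\<in>{..D}. if kN k = \<alpha> then a k else 0)"
      have e: "mpoly e" "\<And>z. meval e z = (\<Sum>k\<in>{..D}. a k * monom_eval (kN k) z)" "Lam s e = (\<Sum>k\<in>{..D}. a k * s (kN k))"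
        unfolding e_def by (rule combo; simp)+
      have "0 \<le> Lam s e"
      proof (rule pos_transfer[OF pp x0K e(1)])
        fix z assume "x0 + z \<in> K"
        then have "0 \<le> z $ None" by (simp add: Kmem x0_def)
        then show "0 \<le> meval e z" unfolding e(2) kN_def monom_pow using H by simp
      qed
      then show ?thesis using e(3) by simp
    qed
    have zero: "s \<alpha> = 0" if "\<alpha> (Some j) \<noteq> 0" for \<alpha> j
    proof -
      define ej where "ej = (\<lambda>i::'n option. if i = Some j then 1 else (0::nat))"
      have mej: "monom_eval ej z = z $ Some j" for z unfolding ej_def by (rule monom_coord)
      obtain cmax where cmax: "cmax \<in> C" "\<And>c. c \<in> C \<Longrightarrow> c $ j \<le> cmax $ j"
        using continuous_attains_sup[OF Cc Cne, of "\<lambda>c. c $ j"] vnth_cont by blast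
      obtain cmin where cmin: "cmin \<in> C" "\<And>c. c \<in> C \<Longrightarrow> cmin $ j \<le> c $ j"
        using continuous_attains_inf[OF Cc Cne, of "\<lambda>c. c $ j"] vnth_cont by blast
      define xp where "xp = embC cmax 0"
      define xm where "xm = embC cmin 0"
      have xpK: "xp \<in> K" unfolding xp_def by (rule embK[OF cmax(1)]) simp
      have xmK: "xm \<in> K" unfolding xm_def by (rule embK[OF cmin(1)]) simp
      have zp: "z $ Some j \<le> 0 \<and> cmin $ j \<le> cmax $ j + z $ Some j" if "xp + z \<in> K" for z
      proof -
        have "(\<chi> i. (xp + z) $ Some i) \<in> C" using that by (simp add: Kmem)
        then have "(\<chi> i. (xp + z) $ Some i) $ j \<le> cmax $ j" "cmin $ j \<le> (\<chi> i. (xp + z) $ Some i) $ j"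
          using cmax(2) cmin(2) by blast+
        then show ?thesis by (simp add: xp_def)
      qed
      have zm: "0 \<le> z $ Some j" if "xm + z \<in> K" for z
      proof -
        have "(\<chi> i. (xm + z) $ Some i) \<in> C" using that by (simp add: Kmem)
        then have "cmin $ j \<le> (\<chi> i. (xm + z) $ Some i) $ j" using cmin(2) by blast
        then show ?thesis by (simp add: xm_def)
      qed
      have s1a: "0 \<le> Lam s (\<lambda>\<alpha>. \<Sum>i\<in>{0::nat}. if ej = \<alpha> then - 1 else 0)"
      proof (rule pos_transfer[OF pp xpK])
        show "mpoly (\<lambda>\<alpha>. \<Sum>i\<in>{0::nat}. if ej = \<alpha> then - 1 else 0)"
          using combo(1)[where I="{0::nat}" and f="\<lambda>_. ej" and a="\<lambda>_. -1"] by simp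
        fix z assume "xp + z \<in> K"
        then show "0 \<le> meval (\<lambda>\<alpha>. \<Sum>i\<in>{0::nat}. if ej = \<alpha> then - 1 else 0) z"
          using combo(2)[where I="{0::nat}" and f="\<lambda>_. ej" and a="\<lambda>_. -1" and x=z] zp mej by simp
      qed
      have s1b: "0 \<le> Lam s (\<lambda>\<alpha>. \<Sum>i\<in>{0::nat}. if ej = \<alpha> then 1 else 0)"
      proof (rule pos_transfer[OF pp xmK])
        show "mpoly (\<lambda>\<alpha>. \<Sum>i\<in>{0::nat}. if ej = \<alpha> then 1 else 0)"
          using combo(1)[where I="{0::nat}" and f="\<lambda>_. ej" and a="\<lambda>_. 1"] by simp
        fix z assume "xm + z \<in> K"
        then show "0 \<le> meval (\<lambda>\<alpha>. \<Sum>i\<in>{0::nat}. if ej = \<alpha> then 1 else 0) z"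
          using combo(2)[where I="{0::nat}" and f="\<lambda>_. ej" and a="\<lambda>_. 1" and x=z] zm mej by simp
      qed
      have s1: "s ej = 0"
        using s1a s1b combo(3)[where I="{0::nat}" and f="\<lambda>_. ej" and a="\<lambda>_. -1" and s=s] combo(3)[where I="{0::nat}" and f="\<lambda>_. ej" and a="\<lambda>_. 1" and s=s]
        by simp
      define Md where "Md = cmax $ j - cmin $ j"
      define f2 where "f2 i = (if i = (0::nat) then ej else madd ej ej)" for i
      define a2 where "a2 i = (if i = (0::nat) then - Md else -1)" for i
      define e2 where "e2 = (\<lambda>\<alpha>. \<Sum>i\<in>{0::nat,1}. if f2 i = \<alpha> then a2 i else 0)"
      have e2: "mpoly e2" "\<And>z. meval e2 z = (\<Sum>i\<in>{0::nat,1}. a2 i * monom_eval (f2 i) z)"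
        "Lam s e2 = (\<Sum>i\<in>{0::nat,1}. a2 i * s (f2 i))"
        unfolding e2_def by (rule combo; simp)+
      have "0 \<le> Lam s e2"
      proof (rule pos_transfer[OF pp xpK e2(1)])
        fix z assume "xp + z \<in> K"
        then have zz: "z $ Some j \<le> 0 \<and> cmin $ j \<le> cmax $ j + z $ Some j" by (rule zp)
        then have "z $ Some j \<le> 0" "0 \<le> Md + z $ Some j" unfolding Md_def by linarith+
        then have "0 \<le> (- z $ Some j) * (Md + z $ Some j)" by (intro mult_nonneg_nonneg) auto
        then show "0 \<le> meval e2 z"
          unfolding e2(2) by (simp add: f2_def a2_def monom_eval_madd mej algebra_simps power2_eq_square)
      qed
      then have s2le: "s (madd ej ej) \<le> 0" using e2(3) s1 by (simp add: f2_def a2_def)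
      have sq: "0 \<le> a^2 * s (madd ej ej) + 2*a*b * s (madd ej \<beta>) + b^2 * s (madd \<beta> \<beta>)" for a b \<beta>
      proof -
        define f3 where "f3 i = (if i = (0::nat) then madd ej ej else if i = 1 then madd ej \<beta> else madd \<beta> \<beta>)" for i
        define a3 where "a3 i = (if i = (0::nat) then a^2 else if i = 1 then 2*a*b else b^2)" for i
        define e3 where "e3 = (\<lambda>\<alpha>. \<Sum>i\<in>{0::nat,1,2}. if f3 i = \<alpha> then a3 i else 0)"
        have e3: "mpoly e3" "\<And>z. meval e3 z = (\<Sum>i\<in>{0::nat,1,2}. a3 i * monom_eval (f3 i) z)"
          "Lam s e3 = (\<Sum>i\<in>{0::nat,1,2}. a3 i * s (f3 i))"
          unfolding e3_def by (rule combo; simp)+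
        have "0 \<le> Lam s e3"
        proof (rule pos_transfer[OF pp x0K e3(1)])
          fix z
          have "meval e3 z = (a * z $ Some j + b * monom_eval \<beta> z)^2"
            unfolding e3(2) by (simp add: f3_def a3_def monom_eval_madd mej algebra_simps power2_eq_square)
          then show "0 \<le> meval e3 z" by simp
        qed
        then show ?thesis using e3(3) by (simp add: f3_def a3_def)
      qed
      have s2: "s (madd ej ej) = 0" using sq[of 1 0] s2le by simp
      have s3: "s (madd ej \<beta>) = 0" for \<beta>
      proof (rule ccontr)
        assume nz: "s (madd ej \<beta>) \<noteq> 0"
        define a where "a = - (\<bar>s (madd \<beta> \<beta>)\<bar> + 1) / (2 * s (madd ej \<beta>))"
        have "0 \<le> 2*a * s (madd ej \<beta>) + s (madd \<beta> \<beta>)" using sq[of a 1 \<beta>] s2 by simp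
        moreover have "2*a * s (madd ej \<beta>) = - (\<bar>s (madd \<beta> \<beta>)\<bar> + 1)" using nz unfolding a_def by simp
        ultimately show False using abs_ge_self[of "s (madd \<beta> \<beta>)"] by linarith
      qed
      have "\<alpha> = madd ej (msub \<alpha> ej)"
        using that by (auto simp: madd_def msub_def ej_def fun_eq_iff)
      then show ?thesis using s3 by metis
    qed
    obtain \<nu> where \<nu>: "sets \<nu> = sets borel" "emeasure \<nu> {..<0} = 0"
      "\<And>k. integrable \<nu> (\<lambda>t. t^k)" "\<And>k. (\<integral>t. t^k \<partial>\<nu>) = s (kN k)"
      using stieltjes[of "\<lambda>k. s (kN k)", OF pos1] by blast
    define u where "u = (\<chi> i::'n option. if i = None then 1 else (0::real))"
    define \<mu> where "\<mu> = distr \<nu> borel (\<lambda>t. t *\<^sub>R u)"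
    have meas: "(\<lambda>t. t *\<^sub>R u) \<in> measurable \<nu> borel"
      using \<nu>(1) by (simp add: measurable_cong_sets[OF \<nu>(1) refl])
    have spn: "space \<nu> = UNIV" using sets_eq_imp_space_eq[OF \<nu>(1)] by simp
    have monu: "monom_eval \<alpha> (t *\<^sub>R u) = (if (\<forall>j. \<alpha> (Some j) = 0) then t^(\<alpha> None) else 0)" for \<alpha> t
    proof (cases "\<forall>j. \<alpha> (Some j) = 0")
      case True
      then have "\<alpha> = kN (\<alpha> None)" by (auto simp: kN_def fun_eq_iff split: option.splits)
      then have "monom_eval \<alpha> (t *\<^sub>R u) = monom_eval (kN (\<alpha> None)) (t *\<^sub>R u)" by simp
      also have "\<dots> = t^(\<alpha> None)" unfolding kN_def monom_pow by (simp add: u_def)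
      finally show ?thesis using True by simp
    next
      case False
      then obtain j where j: "\<alpha> (Some j) \<noteq> 0" by blast
      have "monom_eval \<alpha> (t *\<^sub>R u) = 0"
        unfolding monom_eval_def using j by (intro prod_zero) (auto simp: u_def intro!: bexI[of _ "Some j"])
      then show ?thesis by (subst if_not_P[OF False])
    qed
    have "moment_seq Ls s"
      unfolding moment_seq_def
    proof (intro exI[of _ \<mu>] conjI allI)
      show "sets \<mu> = sets borel" unfolding \<mu>_def by simp
      have "emeasure \<mu> (UNIV - Ls) = emeasure \<nu> ((\<lambda>t. t *\<^sub>R u) -` (UNIV - Ls) \<inter> space \<nu>)"
        unfolding \<mu>_def by (rule emeasure_distr[OF meas]) (use Lborel in auto)
      also have "(\<lambda>t. t *\<^sub>R u) -` (UNIV - Ls) \<inter> space \<nu> = {..<0}"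
        unfolding spn by (auto simp: Ls_def u_def)
      finally show "emeasure \<mu> (UNIV - Ls) = 0" using \<nu>(2) by simp
      fix \<alpha>
      have int_eq: "integrable \<mu> (monom_eval \<alpha>) \<longleftrightarrow> integrable \<nu> (\<lambda>t. monom_eval \<alpha> (t *\<^sub>R u))"
        unfolding \<mu>_def by (rule integrable_distr_eq[OF meas]) simp
      have intg_eq: "(\<integral>x. monom_eval \<alpha> x \<partial>\<mu>) = (\<integral>t. monom_eval \<alpha> (t *\<^sub>R u) \<partial>\<nu>)"
        unfolding \<mu>_def by (rule integral_distr[OF meas]) simp
      show "integrable \<mu> (monom_eval \<alpha>)"
      proof (cases "\<forall>j. \<alpha> (Some j) = 0")
        case True then show ?thesis unfolding int_eq monu using \<nu>(3) by simp
      next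
        case False
        have "(\<lambda>t. if \<forall>j. \<alpha> (Some j) = 0 then t ^ \<alpha> None else 0) = (\<lambda>t. 0::real)"
          by (rule ext) (simp only: if_not_P[OF False])
        then show ?thesis unfolding int_eq monu by simp
      qed
      show "s \<alpha> = (\<integral>x. monom_eval \<alpha> x \<partial>\<mu>)"
      proof (cases "\<forall>j. \<alpha> (Some j) = 0")
        case True
        then have "\<alpha> = kN (\<alpha> None)" by (auto simp: kN_def fun_eq_iff split: option.splits)
        then show ?thesis unfolding intg_eq monu using True \<nu>(4)[of "\<alpha> None"] by simp
      next
        case False
        have "(\<lambda>t. if \<forall>j. \<alpha> (Some j) = 0 then t ^ \<alpha> None else 0) = (\<lambda>t. 0::real)"
          by (rule ext) (simp only: if_not_P[OF False])
        moreover have "s \<alpha> = 0" using False zero by blast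
        ultimately show ?thesis unfolding intg_eq monu by simp
      qed
    qed
    then show "moment_seq (Ksharp K) s" using Ks by simp
  next
    assume ms: "moment_seq (Ksharp K) s"
    then obtain \<mu> :: "(real^('n option)) measure" where \<mu>: "sets \<mu> = sets borel" "emeasure \<mu> (UNIV - Ls) = 0"
      "\<And>\<alpha>. integrable \<mu> (monom_eval \<alpha>)" "\<And>\<alpha>. s \<alpha> = (\<integral>x. monom_eval \<alpha> x \<partial>\<mu>)"
      unfolding moment_seq_def Ks by blast
    have spm: "space \<mu> = UNIV" using sets_eq_imp_space_eq[OF \<mu>(1)] by simp
    have AEL: "AE y in \<mu>. y \<in> Ls"
    proof (rule AE_I')
      show "UNIV - Ls \<in> null_sets \<mu>" using \<mu>(2) Lborel \<mu>(1) by (auto simp: null_sets_def)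
    qed auto
    show "pos_preserver K (Dop s)"
      unfolding pos_preserver_def
    proof (intro allI impI ballI)
      fix c x assume cH: "mpoly c \<and> (\<forall>x\<in>K. 0 \<le> meval c x)" and xK: "x \<in> K"
      define Sc where "Sc = {\<gamma>. c \<gamma> \<noteq> 0}"
      have finSc: "finite Sc" using cH unfolding mpoly_def Sc_def by simp
      have "meval (Dop s c) x = (\<Sum>\<gamma>\<in>Sc. c \<gamma> * (\<Sum>\<alpha>\<in>le_set \<gamma>. s \<alpha> * mbinom \<gamma> \<alpha> * monom_eval (msub \<gamma> \<alpha>) x))"
        unfolding Sc_def using meval_Dop cH by blast
      also have "\<dots> = (\<Sum>\<gamma>\<in>Sc. \<integral>y. c \<gamma> * (\<Sum>\<alpha>\<in>le_set \<gamma>. monom_eval \<alpha> y * (mbinom \<gamma> \<alpha> * monom_eval (msub \<gamma> \<alpha>) x)) \<partial>\<mu>)"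
      proof (rule sum.cong[OF refl])
        fix \<gamma>
        have "(\<integral>y. c \<gamma> * (\<Sum>\<alpha>\<in>le_set \<gamma>. monom_eval \<alpha> y * (mbinom \<gamma> \<alpha> * monom_eval (msub \<gamma> \<alpha>) x)) \<partial>\<mu>)
           = c \<gamma> * (\<Sum>\<alpha>\<in>le_set \<gamma>. (\<integral>y. monom_eval \<alpha> y \<partial>\<mu>) * (mbinom \<gamma> \<alpha> * monom_eval (msub \<gamma> \<alpha>) x))"
        proof -
          define Kc where "Kc \<alpha> = mbinom \<gamma> \<alpha> * monom_eval (msub \<gamma> \<alpha>) x" for \<alpha>
          have "(\<integral>y. c \<gamma> * (\<Sum>\<alpha>\<in>le_set \<gamma>. monom_eval \<alpha> y * Kc \<alpha>) \<partial>\<mu>)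
                = c \<gamma> * (\<integral>y. (\<Sum>\<alpha>\<in>le_set \<gamma>. monom_eval \<alpha> y * Kc \<alpha>) \<partial>\<mu>)"
            by (rule integral_mult_right_zero)
          also have "(\<integral>y. (\<Sum>\<alpha>\<in>le_set \<gamma>. monom_eval \<alpha> y * Kc \<alpha>) \<partial>\<mu>)
                = (\<Sum>\<alpha>\<in>le_set \<gamma>. (\<integral>y. monom_eval \<alpha> y * Kc \<alpha> \<partial>\<mu>))"
            by (rule Bochner_Integration.integral_sum) (intro integrable_mult_left \<mu>(3))
          also have "\<dots> = (\<Sum>\<alpha>\<in>le_set \<gamma>. (\<integral>y. monom_eval \<alpha> y \<partial>\<mu>) * Kc \<alpha>)"
            by (intro sum.cong refl integral_mult_left_zero)
          finally show ?thesis unfolding Kc_def .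
        qed
        note I1 = this
        show "c \<gamma> * (\<Sum>\<alpha>\<in>le_set \<gamma>. s \<alpha> * mbinom \<gamma> \<alpha> * monom_eval (msub \<gamma> \<alpha>) x)
           = (\<integral>y. c \<gamma> * (\<Sum>\<alpha>\<in>le_set \<gamma>. monom_eval \<alpha> y * (mbinom \<gamma> \<alpha> * monom_eval (msub \<gamma> \<alpha>) x)) \<partial>\<mu>)"
          unfolding I1 \<mu>(4)[symmetric] by (simp add: mult.assoc)
      qed
      also have "\<dots> = (\<integral>y. (\<Sum>\<gamma>\<in>Sc. c \<gamma> * (\<Sum>\<alpha>\<in>le_set \<gamma>. monom_eval \<alpha> y * (mbinom \<gamma> \<alpha> * monom_eval (msub \<gamma> \<alpha>) x))) \<partial>\<mu>)"
        by (rule Bochner_Integration.integral_sum[symmetric]) (auto intro!: integrable_mult_right Bochner_Integration.integrable_sum integrable_mult_left \<mu>(3))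
      also have "\<dots> = (\<integral>y. meval c (x + y) \<partial>\<mu>)"
      proof (rule Bochner_Integration.integral_cong[OF refl])
        fix y
        show "(\<Sum>\<gamma>\<in>Sc. c \<gamma> * (\<Sum>\<alpha>\<in>le_set \<gamma>. monom_eval \<alpha> y * (mbinom \<gamma> \<alpha> * monom_eval (msub \<gamma> \<alpha>) x))) = meval c (x + y)"
          unfolding meval_def Sc_def[symmetric] monom_binom by (intro sum.cong refl arg_cong[where f="\<lambda>t. c _ * t"]) (simp add: algebra_simps)
      qed
      also have "\<dots> \<ge> 0"
      proof (rule integral_nonneg_AE)
        show "AE y in \<mu>. 0 \<le> meval c (x + y)"
          using AEL
        proof eventually_elim
          case (elim y)
          then have "y \<in> Ksharp K" using Ks by simp
          then have "y + x \<in> K" using xK unfolding Ksharp_def by auto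
          then show ?case using cH by (simp add: add.commute)
        qed
      qed
      finally show "0 \<le> meval (Dop s c) x" .
    qed
  qed
qed

end
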